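(* Let $\mathfrak{g}$ be a Leibniz algebra, $\mathfrak{b}$ a two-sided ideal of $\mathfrak{g}$, and $\mathfrak{a}=\mathfrak{g}/\mathfrak{b}$. Then there exist a Leibniz algebra $\mathfrak{q}$ and a two-sided ideal $\mathfrak{m}$ of $\mathfrak{q}$ such that: (a) $[\mathfrak{g},\mathfrak{g}]_{\mathrm{Lie}}\cap\mathfrak{b}\cong \mathfrak{q}/\mathfrak{m}$; (b) $\mathfrak{m}\cong\mathcal{M}^{\mathrm{Lie}}(\mathfrak{g})$; (c) $\mathcal{M}^{\mathrm{Lie}}(\mathfrak{a})$ is an epimorphic image of $\mathfrak{q}$.
   Context: Fix a field $\mathbb{K}$ with $\frac12\in\mathbb{K}$. A Leibniz algebra is a $\mathbb{K}$-vector space with a bilinear bracket satisfying $[x,[y,z]]=[[x,y],z]-[[x,z],y]$. For two-sided ideals $\mathfrak{m},\mathfrak{n}$, $[\mathfrak{m},\mathfrak{n}]_{\mathrm{Lie}}$ is the subspace spanned by all $[m,n]+[n,m]$, $m\in\mathfrak{m},n\in\mathfrak{n}$. For a Leibniz algebra $\mathfrak{g}$ with a free presentation $0\to\mathfrak{r}\to\mathfrak{f}\to\mathfrak{g}\to0$ ($\mathfrak{f}$ a free Leibniz algebra, $\mathfrak{r}$ the kernel), the Schur $\mathrm{Lie}$-multiplier is $\mathcal{M}^{\mathrm{Lie}}(\mathfrak{g})=\frac{\mathfrak{r}\cap[\mathfrak{f},\mathfrak{f}]_{\mathrm{Lie}}}{[\mathfrak{f},\mathfrak{r}]_{\mathrm{Lie}}}$;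 up to isomorphism it does not depend on the chosen free presentation. *)

theory Defs
  imports Main
begin

record ('k, 'a) leib =
  lcarrier :: "'a set"
  lzero :: 'a
  ladd :: "'a \<Rightarrow> 'a \<Rightarrow> 'a"
  lsmult :: "'k \<Rightarrow> 'a \<Rightarrow> 'a"
  lbr :: "'a \<Rightarrow> 'a \<Rightarrow> 'a"

definition vector_space_on :: "('k::field, 'a) leib \<Rightarrow> bool" where
  "vector_space_on L \<longleftrightarrow>
     lzero L \<in> lcarrier L \<and>
     (\<forall>x\<in>lcarrier L. \<forall>y\<in>lcarrier L. ladd L x y \<in> lcarrier L) \<and>
     (\<forall>c. \<forall>x\<in>lcarrier L. lsmult L c x \<in> lcarrier L) \<and>
     (\<forall>x\<in>lcarrier L. \<forall>y\<in>lcarrier L. \<forall>z\<in>lcarrier L.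
        ladd L (ladd L x y) z = ladd L x (ladd L y z)) \<and>
     (\<forall>x\<in>lcarrier L. \<forall>y\<in>lcarrier L. ladd L x y = ladd L y x) \<and>
     (\<forall>x\<in>lcarrier L. ladd L (lzero L) x = x) \<and>
     (\<forall>x\<in>lcarrier L. ladd L x (lsmult L (-1) x) = lzero L) \<and>
     (\<forall>x\<in>lcarrier L. lsmult L 1 x = x) \<and>
     (\<forall>a b. \<forall>x\<in>lcarrier L. lsmult L a (lsmult L b x) = lsmult L (a * b) x) \<and>
     (\<forall>a b. \<forall>x\<in>lcarrier L. lsmult L (a + b) x = ladd L (lsmult L a x) (lsmult L b x)) \<and>
     (\<forall>a. \<forall>x\<in>lcarrier L. \<forall>y\<in>lcarrier L.
        lsmult L a (ladd L x y) = ladd L (lsmult L a x) (lsmult L a y))"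

definition leibniz :: "('k::field, 'a) leib \<Rightarrow> bool" where
  "leibniz L \<longleftrightarrow> vector_space_on L \<and>
     (\<forall>x\<in>lcarrier L. \<forall>y\<in>lcarrier L. lbr L x y \<in> lcarrier L) \<and>
     (\<forall>x\<in>lcarrier L. \<forall>y\<in>lcarrier L. \<forall>z\<in>lcarrier L.
        lbr L (ladd L x y) z = ladd L (lbr L x z) (lbr L y z) \<and>
        lbr L z (ladd L x y) = ladd L (lbr L z x) (lbr L z y)) \<and>
     (\<forall>c. \<forall>x\<in>lcarrier L. \<forall>y\<in>lcarrier L.
        lbr L (lsmult L c x) y = lsmult L c (lbr L x y) \<and>
        lbr L x (lsmult L c y) = lsmult L c (lbr L x y)) \<and>
     (\<forall>x\<in>lcarrier L. \<forall>y\<in>lcarrier L. \<forall>z\<in>lcarrier L.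
        lbr L x (lbr L y z) =
          ladd L (lbr L (lbr L x y) z) (lsmult L (-1) (lbr L (lbr L x z) y)))"

definition subspace :: "('k::field, 'a) leib \<Rightarrow> 'a set \<Rightarrow> bool" where
  "subspace L S \<longleftrightarrow> S \<subseteq> lcarrier L \<and> lzero L \<in> S \<and>
     (\<forall>x\<in>S. \<forall>y\<in>S. ladd L x y \<in> S) \<and> (\<forall>c. \<forall>x\<in>S. lsmult L c x \<in> S)"

definition ideal :: "('k::field, 'a) leib \<Rightarrow> 'a set \<Rightarrow> bool" where
  "ideal L I \<longleftrightarrow> subspace L I \<and>
     (\<forall>x\<in>lcarrier L. \<forall>i\<in>I. lbr L x i \<in> I \<and> lbr L i x \<in> I)"

definition lspan :: "('k::field, 'a) leib \<Rightarrow> 'a set \<Rightarrow> 'a set" where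
  "lspan L S = \<Inter>{T. subspace L T \<and> S \<subseteq> T}"

definition lie_br :: "('k::field, 'a) leib \<Rightarrow> 'a set \<Rightarrow> 'a set \<Rightarrow> 'a set" where
  "lie_br L M N = lspan L {ladd L (lbr L m n) (lbr L n m) | m n. m \<in> M \<and> n \<in> N}"

definition subalg :: "('k, 'a) leib \<Rightarrow> 'a set \<Rightarrow> ('k, 'a) leib" where
  "subalg L S = L\<lparr>lcarrier := S\<rparr>"

definition coset :: "('k, 'a) leib \<Rightarrow> 'a set \<Rightarrow> 'a \<Rightarrow> 'a set" where
  "coset L I x = {y \<in> lcarrier L. \<exists>i\<in>I. y = ladd L x i}"

definition quot :: "('k, 'a) leib \<Rightarrow> 'a set \<Rightarrow> ('k, 'a set) leib" where
  "quot L I = \<lparr> lcarrier = coset L I ` lcarrier L,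
               lzero = coset L I (lzero L),
               ladd = (\<lambda>X Y. coset L I (ladd L (SOME x. x \<in> X) (SOME y. y \<in> Y))),
               lsmult = (\<lambda>c X. coset L I (lsmult L c (SOME x. x \<in> X))),
               lbr = (\<lambda>X Y. coset L I (lbr L (SOME x. x \<in> X) (SOME y. y \<in> Y))) \<rparr>"

definition hom :: "('k, 'a) leib \<Rightarrow> ('k, 'b) leib \<Rightarrow> ('a \<Rightarrow> 'b) \<Rightarrow> bool" where
  "hom L1 L2 f \<longleftrightarrow>
     (\<forall>x\<in>lcarrier L1. f x \<in> lcarrier L2) \<and>
     (\<forall>x\<in>lcarrier L1. \<forall>y\<in>lcarrier L1. f (ladd L1 x y) = ladd L2 (f x) (f y)) \<and>
     (\<forall>c. \<forall>x\<in>lcarrier L1. f (lsmult L1 c x) = lsmult L2 c (f x)) \<and>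
     (\<forall>x\<in>lcarrier L1. \<forall>y\<in>lcarrier L1. f (lbr L1 x y) = lbr L2 (f x) (f y))"

definition isomorphic :: "('k, 'a) leib \<Rightarrow> ('k, 'b) leib \<Rightarrow> bool" where
  "isomorphic L1 L2 \<longleftrightarrow> (\<exists>f. hom L1 L2 f \<and> bij_betw f (lcarrier L1) (lcarrier L2))"

definition epimorphic_image :: "('k, 'b) leib \<Rightarrow> ('k, 'a) leib \<Rightarrow> bool" where
  "epimorphic_image L2 L1 \<longleftrightarrow> (\<exists>f. hom L1 L2 f \<and> f ` lcarrier L1 = lcarrier L2)"

text \<open>Elements: finitely supported K-linear combinations of nonempty words over X.
  Bracket on words: [u,v] = u v for a letter v, and [u, w v] = [u,w] v - [u v, w].\<close>

definition single_word :: "'x list \<Rightarrow> ('x list \<Rightarrow> 'k::field)" where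
  "single_word u = (\<lambda>w. if w = u then 1 else 0)"

definition append_letter :: "'x \<Rightarrow> ('x list \<Rightarrow> 'k::field) \<Rightarrow> ('x list \<Rightarrow> 'k)" where
  "append_letter v c = (\<lambda>w. if w \<noteq> [] \<and> last w = v then c (butlast w) else 0)"

text \<open>wbr_rev u ys = [u, rev ys] for words u and rev ys.\<close>
fun wbr_rev :: "'x list \<Rightarrow> 'x list \<Rightarrow> ('x list \<Rightarrow> 'k::field)" where
  "wbr_rev u [] = (\<lambda>_. 0)"
| "wbr_rev u [v] = single_word (u @ [v])"
| "wbr_rev u (v # y # ys) =
     (\<lambda>w. append_letter v (wbr_rev u (y # ys)) w - wbr_rev (u @ [v]) (y # ys) w)"

definition wbr :: "'x list \<Rightarrow> 'x list \<Rightarrow> ('x list \<Rightarrow> 'k::field)" where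
  "wbr u w = wbr_rev u (rev w)"

definition supp :: "('x list \<Rightarrow> 'k::field) \<Rightarrow> 'x list set" where
  "supp a = {w. a w \<noteq> 0}"

definition free_leib :: "'x set \<Rightarrow> ('k::field, 'x list \<Rightarrow> 'k) leib" where
  "free_leib X = \<lparr> lcarrier = {a. finite (supp a) \<and> (\<forall>w\<in>supp a. w \<noteq> [] \<and> set w \<subseteq> X)},
                  lzero = (\<lambda>_. 0),
                  ladd = (\<lambda>a b w. a w + b w),
                  lsmult = (\<lambda>c a w. c * a w),
                  lbr = (\<lambda>a b w. \<Sum>u\<in>supp a. \<Sum>v\<in>supp b. a u * b v * wbr u v w) \<rparr>"

text \<open>The canonical presentation: f = free Leibniz algebra on the underlying set of g,
  with the homomorphism f -> g sending each generator [x] to x; r is its kernel.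
  M^Lie(g) = (r \<inter> [f,f]_Lie) / [f,r]_Lie.\<close>
definition canon_pres :: "('k::field, 'a) leib \<Rightarrow> ('a list \<Rightarrow> 'k) \<Rightarrow> 'a" where
  "canon_pres g = (SOME \<phi>. hom (free_leib (lcarrier g)) g \<phi> \<and>
                     (\<forall>x\<in>lcarrier g. \<phi> (single_word [x]) = x))"

definition schur_lie :: "('k::field, 'a) leib \<Rightarrow> ('k, ('a list \<Rightarrow> 'k) set) leib" where
  "schur_lie g =
     (let f = free_leib (lcarrier g);
          r = {a \<in> lcarrier f. canon_pres g a = lzero g}
      in quot (subalg f (r \<inter> lie_br f (lcarrier f) (lcarrier f))) (lie_br f (lcarrier f) r))"

end

theory Submission
  imports Defs "HOL-Library.Function_Algebras"
begin


definition Lin :: "('x list \<Rightarrow> 'k::field) \<Rightarrow> ('x list \<Rightarrow> 'x list \<Rightarrow> 'k) \<Rightarrow> 'x list \<Rightarrow> 'k" where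
  "Lin a F = (\<lambda>w. \<Sum>u\<in>supp a. a u * F u w)"

abbreviation fin :: "('x list \<Rightarrow> 'k::field) \<Rightarrow> bool" where
  "fin a \<equiv> finite (supp a)"

lemma supp_iff[simp]: "u \<in> supp a \<longleftrightarrow> a u \<noteq> 0" by (simp add: supp_def)

lemma Lin_superset:
  assumes "finite S" "supp a \<subseteq> S"
  shows "Lin a F w = (\<Sum>u\<in>S. a u * F u w)"
  unfolding Lin_def using assms
  by (intro sum.mono_neutral_left) auto

lemma supp_add: "supp (a + b) \<subseteq> supp a \<union> supp b" by (auto simp: supp_def)
lemma supp_diff: "supp (a - b) \<subseteq> supp a \<union> supp b" by (auto simp: supp_def)
lemma supp_smult: "supp (\<lambda>w. c * a w) \<subseteq> supp a" by (auto simp: supp_def)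
lemma supp_zero[simp]: "supp (0::'x list \<Rightarrow> 'k::field) = {}" by (auto simp: supp_def)
lemma supp_zero'[simp]: "supp (\<lambda>_. 0::'k::field) = {}" by (auto simp: supp_def)

lemma fin_add: "fin a \<Longrightarrow> fin b \<Longrightarrow> fin (a + b)" by (meson finite_UnI finite_subset supp_add)
lemma fin_diff: "fin a \<Longrightarrow> fin b \<Longrightarrow> fin (a - b)" by (meson finite_UnI finite_subset supp_diff)
lemma fin_smult: "fin a \<Longrightarrow> fin (\<lambda>w. c * a w)" by (rule finite_subset[OF supp_smult])

lemma Lin_add1: "fin a \<Longrightarrow> fin b \<Longrightarrow> Lin (a + b) F = Lin a F + Lin b F"
proof (rule ext)
  fix w assume a: "fin a" "fin b"
  let ?S = "supp a \<union> supp b"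
  have "Lin (a + b) F w = (\<Sum>u\<in>?S. (a+b) u * F u w)" using a supp_add by (intro Lin_superset) auto
  also have "\<dots> = (\<Sum>u\<in>?S. a u * F u w) + (\<Sum>u\<in>?S. b u * F u w)"
    by (simp add: distrib_right sum.distrib)
  also have "\<dots> = Lin a F w + Lin b F w" using a by (subst (1 2) Lin_superset[of ?S]) auto
  finally show "Lin (a + b) F w = (Lin a F + Lin b F) w" by simp
qed

lemma Lin_diff1: "fin a \<Longrightarrow> fin b \<Longrightarrow> Lin (a - b) F = Lin a F - Lin b F"
proof (rule ext)
  fix w assume a: "fin a" "fin b"
  let ?S = "supp a \<union> supp b"
  have "Lin (a - b) F w = (\<Sum>u\<in>?S. (a-b) u * F u w)" using a supp_diff by (intro Lin_superset) auto
  also have "\<dots> = (\<Sum>u\<in>?S. a u * F u w) - (\<Sum>u\<in>?S. b u * F u w)"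
    by (simp add: left_diff_distrib sum_subtractf)
  also have "\<dots> = Lin a F w - Lin b F w" using a by (subst (1 2) Lin_superset[of ?S]) auto
  finally show "Lin (a - b) F w = (Lin a F - Lin b F) w" by simp
qed

lemma Lin_smult1: "fin a \<Longrightarrow> Lin (\<lambda>w. c * a w) F = (\<lambda>w. c * Lin a F w)"
proof (rule ext)
  fix w assume a: "fin a"
  have "Lin (\<lambda>w. c * a w) F w = (\<Sum>u\<in>supp a. c * a u * F u w)" using a supp_smult by (intro Lin_superset) auto
  also have "\<dots> = c * Lin a F w" by (simp add: Lin_def sum_distrib_left mult.assoc)
  finally show "Lin (\<lambda>w. c * a w) F w = c * Lin a F w" .
qed

lemma Lin_add2: "Lin a (\<lambda>u. F u + G u) = Lin a F + Lin a G"
  by (rule ext) (simp add: Lin_def distrib_left sum.distrib)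
lemma Lin_diff2: "Lin a (\<lambda>u. F u - G u) = Lin a F - Lin a G"
  by (rule ext) (simp add: Lin_def right_diff_distrib sum_subtractf)
lemma Lin_cong2: "(\<And>u. u \<in> supp a \<Longrightarrow> F u = G u) \<Longrightarrow> Lin a F = Lin a G"
  by (rule ext) (simp add: Lin_def)
lemma Lin_zero2: "Lin a (\<lambda>u. 0) = 0"
  by (rule ext) (simp add: Lin_def)

lemma supp_single: "supp (single_word u :: _ \<Rightarrow> 'k::field) = {u}"
  by (auto simp: supp_def single_word_def)

lemma Lin_single: "Lin (single_word u) F = F u"
  unfolding Lin_def supp_single by (rule ext) (simp add: single_word_def)

lemma Lin_decomp: "fin a \<Longrightarrow> Lin a single_word = a"
proof (rule ext)
  fix w assume "fin a"
  show "Lin a single_word w = a w"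
  proof (cases "w \<in> supp a")
    case True
    have "Lin a single_word w = (\<Sum>u\<in>supp a. if u = w then a u else 0)"
      unfolding Lin_def by (intro sum.cong) (auto simp: single_word_def)
    also have "\<dots> = a w" using True \<open>fin a\<close> by (simp add: sum.delta)
    finally show ?thesis .
  next
    case False
    have "Lin a single_word w = (\<Sum>u\<in>supp a. 0)"
      unfolding Lin_def using False by (intro sum.cong) (auto simp: single_word_def)
    then show ?thesis using False by simp
  qed
qed

lemma supp_Lin: "supp (Lin a F) \<subseteq> (\<Union>u\<in>supp a. supp (F u))"
proof
  fix w assume "w \<in> supp (Lin a F)"
  then have "(\<Sum>u\<in>supp a. a u * F u w) \<noteq> 0" by (simp add: Lin_def)
  then obtain u where "u \<in> supp a" "a u * F u w \<noteq> 0" by (meson sum.neutral)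
  then show "w \<in> (\<Union>u\<in>supp a. supp (F u))" by auto
qed

lemma fin_Lin: "fin a \<Longrightarrow> (\<And>u. u \<in> supp a \<Longrightarrow> fin (F u)) \<Longrightarrow> fin (Lin a F)"
  by (rule finite_subset[OF supp_Lin]) auto

lemma Lin_Lin:
  assumes "fin a" "\<And>u. u \<in> supp a \<Longrightarrow> fin (F u)"
  shows "Lin (Lin a F) G = Lin a (\<lambda>u. Lin (F u) G)"
proof (rule ext)
  fix w
  let ?V = "\<Union>u\<in>supp a. supp (F u)"
  have fV: "finite ?V" using assms by auto
  have "Lin (Lin a F) G w = (\<Sum>v\<in>?V. Lin a F v * G v w)"
    using fV supp_Lin by (intro Lin_superset) auto
  also have "\<dots> = (\<Sum>v\<in>?V. \<Sum>u\<in>supp a. a u * F u v * G v w)"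
    by (simp add: Lin_def sum_distrib_right)
  also have "\<dots> = (\<Sum>u\<in>supp a. \<Sum>v\<in>?V. a u * F u v * G v w)"
    by (rule sum.swap)
  also have "\<dots> = (\<Sum>u\<in>supp a. a u * (\<Sum>v\<in>?V. F u v * G v w))"
    by (simp add: sum_distrib_left mult.assoc)
  also have "\<dots> = (\<Sum>u\<in>supp a. a u * Lin (F u) G w)"
    using fV by (intro sum.cong refl arg_cong[where f="\<lambda>x. _ * x"] Lin_superset[symmetric]) auto
  also have "\<dots> = Lin a (\<lambda>u. Lin (F u) G) w" by (simp add: Lin_def)
  finally show "Lin (Lin a F) G w = Lin a (\<lambda>u. Lin (F u) G) w" .
qed

lemma Lin_swap: "Lin a (\<lambda>u. Lin b (H u)) = Lin b (\<lambda>v. Lin a (\<lambda>u. H u v))"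
proof (rule ext)
  fix w
  have "Lin a (\<lambda>u. Lin b (H u)) w = (\<Sum>u\<in>supp a. \<Sum>v\<in>supp b. a u * (b v * H u v w))"
    by (simp add: Lin_def sum_distrib_left)
  also have "\<dots> = (\<Sum>v\<in>supp b. \<Sum>u\<in>supp a. a u * (b v * H u v w))" by (rule sum.swap)
  also have "\<dots> = (\<Sum>v\<in>supp b. b v * (\<Sum>u\<in>supp a. a u * H u v w))"
    by (simp add: sum_distrib_left mult.left_commute)
  also have "\<dots> = Lin b (\<lambda>v. Lin a (\<lambda>u. H u v)) w" by (simp add: Lin_def)
  finally show "Lin a (\<lambda>u. Lin b (H u)) w = Lin b (\<lambda>v. Lin a (\<lambda>u. H u v)) w" .
qed

lemma wbr_nil[simp]: "wbr u [] = (\<lambda>_. 0)" by (simp add: wbr_def)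
lemma wbr_letter: "wbr u [v] = single_word (u @ [v])" by (simp add: wbr_def)
lemma wbr_snoc:
  assumes "w0 \<noteq> []"
  shows "wbr u (w0 @ [v]) = append_letter v (wbr u w0) - wbr (u @ [v]) w0"
proof -
  obtain y ys where r: "rev w0 = y # ys" using assms by (cases "rev w0") auto
  show ?thesis unfolding wbr_def using r by (simp add: fun_eq_iff)
qed

lemma wbr_rev_supp:
  "wbr_rev u ys x \<noteq> (0::'k::field) \<Longrightarrow> length x = length u + length ys \<and> set x \<subseteq> set u \<union> set ys"
proof (induction u ys arbitrary: x rule: wbr_rev.induct)
  case (1 u) then show ?case by simp
next
  case (2 u v) then show ?case by (auto simp: single_word_def split: if_splits)
next
  case (3 u v y ys)
  have "append_letter v (wbr_rev u (y # ys)) x \<noteq> (0::'k) \<or> wbr_rev (u @ [v]) (y # ys) x \<noteq> (0::'k)"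
    using "3.prems" by (cases "append_letter v (wbr_rev u (y # ys)) x = (0::'k)") auto
  then show ?case
  proof
    assume h: "append_letter v (wbr_rev u (y # ys)) x \<noteq> (0::'k)"
    then have x: "x \<noteq> []" "last x = v" "wbr_rev u (y # ys) (butlast x) \<noteq> (0::'k)"
      by (auto simp: append_letter_def split: if_splits)
    from "3.IH"(1)[OF x(3)] have i: "length (butlast x) = length u + length (y # ys)"
       "set (butlast x) \<subseteq> set u \<union> set (y # ys)" by auto
    have xe: "x = butlast x @ [v]" using x by (metis append_butlast_last_id)
    have "length x = length (butlast x) + 1" "set x = set (butlast x) \<union> {v}"
      by (subst xe, simp)+
    then show ?thesis using i by auto
  next
    assume "wbr_rev (u @ [v]) (y # ys) x \<noteq> (0::'k)"
    from "3.IH"(2)[OF this] show ?thesis by auto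
  qed
qed

lemma wbr_supp: "x \<in> supp (wbr u w :: _ \<Rightarrow> 'k::field) \<Longrightarrow> length x = length u + length w \<and> set x \<subseteq> set u \<union> set w"
  using wbr_rev_supp[of u "rev w" x] unfolding wbr_def supp_iff by simp

lemma fin_wbr: "fin (wbr u w :: _ \<Rightarrow> 'k::field)"
proof -
  have "supp (wbr u w :: _ \<Rightarrow> 'k) \<subseteq> {xs. set xs \<subseteq> set u \<union> set w \<and> length xs = length u + length w}"
    using wbr_supp by blast
  moreover have "finite {xs. set xs \<subseteq> set u \<union> set w \<and> length xs = length u + length w}"
    by (rule finite_lists_length_eq) simp
  ultimately show ?thesis by (rule finite_subset)
qed

lemma fin_single: "fin (single_word u)" by (simp add: supp_single)

lemma append_letter_Lin: "fin c \<Longrightarrow> append_letter v c = Lin c (\<lambda>u. single_word (u @ [v]))"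
proof (rule ext)
  fix w assume c: "fin c"
  show "append_letter v c w = Lin c (\<lambda>u. single_word (u @ [v])) w"
  proof (cases "w \<noteq> [] \<and> last w = v")
    case True
    then have w: "w = butlast w @ [v]" by (metis append_butlast_last_id)
    have "Lin c (\<lambda>u. single_word (u @ [v])) w = (\<Sum>u\<in>supp c. if u = butlast w then c u else 0)"
      unfolding Lin_def by (intro sum.cong refl) (use w in \<open>auto simp: single_word_def\<close>)
    also have "\<dots> = c (butlast w)" using c by (simp add: sum.delta')
    finally show ?thesis using True by (simp add: append_letter_def)
  next
    case False
    have "Lin c (\<lambda>u. single_word (u @ [v])) w = (\<Sum>u\<in>supp c. 0)"
      unfolding Lin_def by (intro sum.cong refl) (use False in \<open>auto simp: single_word_def\<close>)
    then show ?thesis using False by (auto simp: append_letter_def)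
  qed
qed

definition BR :: "('x list \<Rightarrow> 'k::field) \<Rightarrow> ('x list \<Rightarrow> 'k) \<Rightarrow> 'x list \<Rightarrow> 'k" where
  "BR a b = Lin a (\<lambda>u. Lin b (wbr u))"

lemma lbr_free: "lbr (free_leib X) = BR"
  by (simp add: free_leib_def BR_def Lin_def fun_eq_iff sum_distrib_left mult.assoc)

lemma BR_single2: "BR x (single_word w) = Lin x (\<lambda>u. wbr u w)"
  by (simp add: BR_def Lin_single)

lemma BR_single1: "BR (single_word u) y = Lin y (wbr u)"
  by (simp add: BR_def Lin_single)

lemma BR_letter: "fin y \<Longrightarrow> BR y (single_word [v]) = append_letter v y"
  by (simp add: BR_single2 wbr_letter append_letter_Lin)

lemma supp_BR: fixes a b :: "'x list \<Rightarrow> 'k::field"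
  shows "supp (BR a b) \<subseteq> (\<Union>u\<in>supp a. \<Union>v\<in>supp b. supp (wbr u v :: 'x list \<Rightarrow> 'k))"
proof -
  have "supp (BR a b) \<subseteq> (\<Union>u\<in>supp a. supp (Lin b (wbr u)))" unfolding BR_def by (rule supp_Lin)
  also have "\<dots> \<subseteq> (\<Union>u\<in>supp a. \<Union>v\<in>supp b. supp (wbr u v :: _ \<Rightarrow> 'k))"
  proof (rule UN_mono[OF order_refl])
    fix u show "supp (Lin b (wbr u)) \<subseteq> (\<Union>v\<in>supp b. supp (wbr u v :: _ \<Rightarrow> 'k))" using supp_Lin[of b "wbr u"] .
  qed
  finally show ?thesis .
qed

lemma fin_BR: "fin a \<Longrightarrow> fin b \<Longrightarrow> fin (BR a b)"
  by (rule finite_subset[OF supp_BR]) (auto simp: fin_wbr)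

lemma BR_Lin1:
  assumes "fin a" "\<And>u. u \<in> supp a \<Longrightarrow> fin (F u)"
  shows "BR (Lin a F) c = Lin a (\<lambda>u. BR (F u) c)"
  unfolding BR_def using assms by (rule Lin_Lin)

lemma BR_Lin2:
  assumes "fin a" "\<And>u. u \<in> supp a \<Longrightarrow> fin (F u)"
  shows "BR x (Lin a F) = Lin a (\<lambda>u. BR x (F u))"
proof -
  have "\<And>u'. Lin (Lin a F) (wbr u') = Lin a (\<lambda>u. Lin (F u) (wbr u'))"
    using assms by (rule Lin_Lin)
  then have "BR x (Lin a F) = Lin x (\<lambda>u'. Lin a (\<lambda>u. Lin (F u) (wbr u')))"
    unfolding BR_def by simp
  also have "\<dots> = Lin a (\<lambda>u. Lin x (\<lambda>u'. Lin (F u) (wbr u')))" by (rule Lin_swap)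
  finally show ?thesis by (simp add: BR_def)
qed

lemma BR_decomp2: "fin y \<Longrightarrow> Lin y (\<lambda>u. BR z (single_word u)) = BR z y"
  using BR_Lin2[of y single_word z] by (simp add: Lin_decomp fin_single)

lemma BR_decomp1: "fin y \<Longrightarrow> Lin y (\<lambda>u. BR (single_word u) z) = BR y z"
  using BR_Lin1[of y single_word z] by (simp add: Lin_decomp fin_single)

lemma BR_add1: "fin a \<Longrightarrow> fin b \<Longrightarrow> BR (a + b) c = BR a c + BR b c"
  by (simp add: BR_def Lin_add1)
lemma BR_diff1: "fin a \<Longrightarrow> fin b \<Longrightarrow> BR (a - b) c = BR a c - BR b c"
  by (simp add: BR_def Lin_diff1)
lemma BR_smult1: "fin a \<Longrightarrow> BR (\<lambda>w. k * a w) c = (\<lambda>w. k * BR a c w)"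
  by (simp add: BR_def Lin_smult1)
lemma BR_add2: "fin a \<Longrightarrow> fin b \<Longrightarrow> BR c (a + b) = BR c a + BR c b"
  by (simp add: BR_def Lin_add1 Lin_add2)
lemma BR_diff2: "fin a \<Longrightarrow> fin b \<Longrightarrow> BR c (a - b) = BR c a - BR c b"
  by (simp add: BR_def Lin_diff1 Lin_diff2)
lemma BR_smult2: "fin a \<Longrightarrow> BR c (\<lambda>w. k * a w) = (\<lambda>w. k * BR c a w)"
proof -
  assume a: "fin a"
  have "BR c (\<lambda>w. k * a w) = Lin c (\<lambda>u w. k * Lin a (wbr u) w)"
    unfolding BR_def using a by (simp add: Lin_smult1)
  also have "\<dots> = (\<lambda>w. k * BR c a w)"
    by (simp add: BR_def Lin_def fun_eq_iff sum_distrib_left mult.left_commute)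
  finally show ?thesis .
qed

definition NE :: "('x list \<Rightarrow> 'k::field) \<Rightarrow> bool" where
  "NE a \<longleftrightarrow> fin a \<and> [] \<notin> supp a"

lemma NE_BR: fixes a b :: "'x list \<Rightarrow> 'k::field"
  shows "fin a \<Longrightarrow> NE b \<Longrightarrow> NE (BR a b)"
proof -
  assume a: "fin a" "NE b"
  have "[] \<notin> supp (BR a b)"
  proof
    assume "[] \<in> supp (BR a b)"
    then obtain u v where "v \<in> supp b" "[] \<in> supp (wbr u v :: _ \<Rightarrow> 'k)" using supp_BR[of a b] by blast
    then show False using wbr_supp[of "[]" u v] a(2) unfolding NE_def by auto
  qed
  then show ?thesis using a fin_BR unfolding NE_def by blast
qed

lemma NE_single: "w \<noteq> [] \<Longrightarrow> NE (single_word w)"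
  by (simp add: NE_def supp_single)

lemma NE_fin: "NE a \<Longrightarrow> fin a" by (simp add: NE_def)

lemma W:
  assumes y: "fin y" and w0: "w0 \<noteq> []"
  shows "BR y (single_word (w0 @ [v])) =
     BR (BR y (single_word w0)) (single_word [v]) - BR (BR y (single_word [v])) (single_word w0)"
proof -
  have "BR y (single_word (w0 @ [v])) = Lin y (\<lambda>u. append_letter v (wbr u w0) - wbr (u @ [v]) w0)"
    by (simp add: BR_single2 wbr_snoc[OF w0])
  also have "\<dots> = Lin y (\<lambda>u. append_letter v (wbr u w0)) - Lin y (\<lambda>u. wbr (u @ [v]) w0)"
    by (rule Lin_diff2)
  also have "Lin y (\<lambda>u. append_letter v (wbr u w0)) = BR (BR y (single_word w0)) (single_word [v])"
    using y by (simp add: BR_single2 wbr_letter Lin_Lin fin_wbr append_letter_Lin)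
  also have "Lin y (\<lambda>u. wbr (u @ [v]) w0) = BR (BR y (single_word [v])) (single_word w0)"
    using y by (simp add: BR_single2 wbr_letter Lin_Lin fin_single Lin_single)
  finally show ?thesis .
qed

lemma base:
  assumes x: "fin x" and y: "NE y"
  shows "BR x (BR y (single_word [v])) =
     BR (BR x y) (single_word [v]) - BR (BR x (single_word [v])) y"
proof -
  have fy: "fin y" using y NE_fin by blast
  have "BR x (BR y (single_word [v])) = BR x (Lin y (\<lambda>u. single_word (u @ [v])))"
    using fy by (simp add: BR_single2 wbr_letter)
  also have "\<dots> = Lin y (\<lambda>u. BR x (single_word (u @ [v])))"
    using fy by (simp add: BR_Lin2 fin_single)
  also have "\<dots> = Lin y (\<lambda>u. BR (BR x (single_word u)) (single_word [v]) - BR (BR x (single_word [v])) (single_word u))"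
    using y x by (intro Lin_cong2 W) (auto simp: NE_def)
  also have "\<dots> = Lin y (\<lambda>u. BR (BR x (single_word u)) (single_word [v])) - Lin y (\<lambda>u. BR (BR x (single_word [v])) (single_word u))"
    by (rule Lin_diff2)
  also have "Lin y (\<lambda>u. BR (BR x (single_word u)) (single_word [v])) = BR (Lin y (\<lambda>u. BR x (single_word u))) (single_word [v])"
    using fy x by (simp add: BR_Lin1 fin_BR fin_single)
  also have "Lin y (\<lambda>u. BR x (single_word u)) = BR x y" using fy by (rule BR_decomp2)
  also have "Lin y (\<lambda>u. BR (BR x (single_word [v])) (single_word u)) = BR (BR x (single_word [v])) y"
    using fy by (rule BR_decomp2)
  finally show ?thesis .
qed


lemma leib_word:
  fixes x y :: "'x list \<Rightarrow> 'k::field"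
  assumes "w \<noteq> []"
  shows "fin x \<Longrightarrow> NE y \<Longrightarrow> BR x (BR y (single_word w)) =
     BR (BR x y) (single_word w) - BR (BR x (single_word w)) y"
  using assms
proof (induction w arbitrary: x y rule: rev_induct)
  case Nil then show ?case by simp
next
  case (snoc v w0)
  show ?case
  proof (cases "w0 = []")
    case True then show ?thesis by (simp only: True append_Nil) (rule base[OF snoc.prems(1,2)])
  next
    case False
    note IH = snoc.IH[OF _ _ False]
    have x: "fin x" and y: "NE y" and fy: "fin y" using snoc.prems by (auto simp: NE_def)
    let ?s = "single_word :: _ \<Rightarrow> _ \<Rightarrow> 'k"
    have fs: "fin (?s w)" for w by (rule fin_single)
    have nes: "NE (?s w0)" "NE (?s [v])" using False by (auto intro: NE_single)
    have f1: "fin (BR y (?s w0))" "fin (BR y (?s [v]))" "fin (BR x (?s w0))" "fin (BR x (?s [v]))"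
      "fin (BR x y)"
      using x fy fs by (auto intro: fin_BR)
    have n1: "NE (BR y (?s w0))" "NE (BR y (?s [v]))" using fy nes by (auto intro: NE_BR)
    have L1: "BR x (BR y (?s (w0 @ [v]))) = BR x (BR (BR y (?s w0)) (?s [v])) - BR x (BR (BR y (?s [v])) (?s w0))"
      unfolding W[OF fy False] by (rule BR_diff2) (simp_all add: fin_BR f1 fs fy)
    have h1: "BR x (BR (BR y (?s w0)) (?s [v])) = BR (BR x (BR y (?s w0))) (?s [v]) - BR (BR x (?s [v])) (BR y (?s w0))"
      by (rule base[OF x n1(1)])
    have h2: "BR (BR x (BR y (?s w0))) (?s [v]) = BR (BR (BR x y) (?s w0)) (?s [v]) - BR (BR (BR x (?s w0)) y) (?s [v])"
      unfolding IH[OF x y] by (rule BR_diff1) (simp_all add: fin_BR f1 fs fy)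
    have h3: "BR (BR x (?s [v])) (BR y (?s w0)) = BR (BR (BR x (?s [v])) y) (?s w0) - BR (BR (BR x (?s [v])) (?s w0)) y"
      by (rule IH[OF f1(4) y])
    have h4: "BR x (BR (BR y (?s [v])) (?s w0)) = BR (BR x (BR y (?s [v]))) (?s w0) - BR (BR x (?s w0)) (BR y (?s [v]))"
      by (rule IH[OF x n1(2)])
    have h5: "BR (BR x (BR y (?s [v]))) (?s w0) = BR (BR (BR x y) (?s [v])) (?s w0) - BR (BR (BR x (?s [v])) y) (?s w0)"
      unfolding base[OF x y] by (rule BR_diff1) (simp_all add: fin_BR f1 fs fy)
    have h6: "BR (BR x (?s w0)) (BR y (?s [v])) = BR (BR (BR x (?s w0)) y) (?s [v]) - BR (BR (BR x (?s w0)) (?s [v])) y"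
      by (rule base[OF f1(3) y])
    have r1: "BR (BR x y) (?s (w0 @ [v])) = BR (BR (BR x y) (?s w0)) (?s [v]) - BR (BR (BR x y) (?s [v])) (?s w0)"
      by (rule W[OF f1(5) False])
    have r2: "BR (BR x (?s (w0 @ [v]))) y = BR (BR (BR x (?s w0)) (?s [v])) y - BR (BR (BR x (?s [v])) (?s w0)) y"
      unfolding W[OF x False] by (rule BR_diff1) (simp_all add: fin_BR f1 fs fy)
    show ?thesis unfolding L1 h1 h4 h2 h3 h5 h6 r1 r2 by (simp add: algebra_simps)
  qed
qed

lemma leib_free:
  assumes x: "fin x" and y: "NE y" and z: "NE z"
  shows "BR x (BR y z) = BR (BR x y) z - BR (BR x z) y"
proof -
  have fy: "fin y" and fz: "fin z" using y z by (auto simp: NE_def)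
  have ne: "w \<in> supp z \<Longrightarrow> w \<noteq> []" for w using z by (auto simp: NE_def)
  have "BR x (BR y z) = BR x (Lin z (\<lambda>w. BR y (single_word w)))" using fz by (simp add: BR_decomp2)
  also have "\<dots> = Lin z (\<lambda>w. BR x (BR y (single_word w)))"
    using fz fy by (simp add: BR_Lin2 fin_BR fin_single)
  also have "\<dots> = Lin z (\<lambda>w. BR (BR x y) (single_word w) - BR (BR x (single_word w)) y)"
    using x y ne by (intro Lin_cong2 leib_word) auto
  also have "\<dots> = Lin z (\<lambda>w. BR (BR x y) (single_word w)) - Lin z (\<lambda>w. BR (BR x (single_word w)) y)"
    by (rule Lin_diff2)
  also have "Lin z (\<lambda>w. BR (BR x y) (single_word w)) = BR (BR x y) z" using fz by (rule BR_decomp2)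
  also have "Lin z (\<lambda>w. BR (BR x (single_word w)) y) = BR (Lin z (\<lambda>w. BR x (single_word w))) y"
    using fz x by (simp add: BR_Lin1 fin_BR fin_single)
  also have "Lin z (\<lambda>w. BR x (single_word w)) = BR x z" using fz by (rule BR_decomp2)
  finally show ?thesis .
qed


locale VS =
  fixes L :: "('k::field, 'a) leib"
  assumes VS: "vector_space_on L"
begin

abbreviation "carr \<equiv> lcarrier L"
abbreviation "add \<equiv> ladd L"
abbreviation "sm \<equiv> lsmult L"
abbreviation "zer \<equiv> lzero L"

definition sub :: "'a \<Rightarrow> 'a \<Rightarrow> 'a" where "sub x y = add x (sm (-1) y)"

lemma zero_closed[simp, intro]: "zer \<in> carr" using VS unfolding vector_space_on_def by auto
lemma add_closed[simp, intro]: "x \<in> carr \<Longrightarrow> y \<in> carr \<Longrightarrow> add x y \<in> carr" using VS unfolding vector_space_on_def by auto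
lemma sm_closed[simp, intro]: "x \<in> carr \<Longrightarrow> sm c x \<in> carr" using VS unfolding vector_space_on_def by auto
lemma add_assoc: "x \<in> carr \<Longrightarrow> y \<in> carr \<Longrightarrow> w \<in> carr \<Longrightarrow> add (add x y) w = add x (add y w)"
  using VS unfolding vector_space_on_def by meson
lemma add_comm: "x \<in> carr \<Longrightarrow> y \<in> carr \<Longrightarrow> add x y = add y x" using VS unfolding vector_space_on_def by auto
lemma zero_add[simp]: "x \<in> carr \<Longrightarrow> add zer x = x" using VS unfolding vector_space_on_def by auto
lemma add_neg: "x \<in> carr \<Longrightarrow> add x (sm (-1) x) = zer" using VS unfolding vector_space_on_def by auto
lemma sm_one[simp]: "x \<in> carr \<Longrightarrow> sm 1 x = x" using VS unfolding vector_space_on_def by auto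
lemma sm_sm[simp]: "x \<in> carr \<Longrightarrow> sm a (sm b x) = sm (a * b) x" using VS unfolding vector_space_on_def by auto
lemma sm_add_scalar: "x \<in> carr \<Longrightarrow> sm (a + b) x = add (sm a x) (sm b x)" using VS unfolding vector_space_on_def by auto
lemma sm_add_vec: "x \<in> carr \<Longrightarrow> y \<in> carr \<Longrightarrow> sm a (add x y) = add (sm a x) (sm a y)" using VS unfolding vector_space_on_def by auto

lemma add_zero[simp]: "x \<in> carr \<Longrightarrow> add x zer = x" by (metis add_comm zero_add zero_closed)

lemma add_left_comm: "x \<in> carr \<Longrightarrow> y \<in> carr \<Longrightarrow> w \<in> carr \<Longrightarrow> add x (add y w) = add y (add x w)"
  by (metis add_assoc add_comm)

lemma add_cancel_left:
  assumes "w \<in> carr" "x \<in> carr" "y \<in> carr" "add w x = add w y"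
  shows "x = y"
proof -
  have "add (sm (-1) w) (add w x) = add (sm (-1) w) (add w y)" using assms by simp
  then show ?thesis using assms
    by (metis add_assoc add_comm add_neg sm_closed zero_add)
qed

lemma sm_zero[simp]: "x \<in> carr \<Longrightarrow> sm 0 x = zer"
proof -
  assume x: "x \<in> carr"
  have "add (sm 0 x) (sm 0 x) = add (sm 0 x) zer" using sm_add_scalar[OF x, of 0 0] x by simp
  then show ?thesis using x add_cancel_left by blast
qed

lemma sm_zero_vec[simp]: "sm c zer = zer"
proof -
  have "add (sm c zer) (sm c zer) = add (sm c zer) zer" using sm_add_vec[of zer zer c] by simp
  then show ?thesis using add_cancel_left by blast
qed

lemma sub_closed[simp, intro]: "x \<in> carr \<Longrightarrow> y \<in> carr \<Longrightarrow> sub x y \<in> carr" by (simp add: sub_def)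
lemma sub_self[simp]: "x \<in> carr \<Longrightarrow> sub x x = zer" by (simp add: sub_def add_neg)
lemma sub_zero[simp]: "x \<in> carr \<Longrightarrow> sub x zer = x" by (simp add: sub_def)

lemma add_sub_cancel: "x \<in> carr \<Longrightarrow> y \<in> carr \<Longrightarrow> add (sub x y) y = x"
  unfolding sub_def by (metis add_assoc add_comm add_neg add_zero sm_closed)

lemma sub_add_cancel: "x \<in> carr \<Longrightarrow> y \<in> carr \<Longrightarrow> sub (add x y) y = x"
  unfolding sub_def by (simp add: add_assoc add_neg)

lemma sub_eq_zero_iff: "x \<in> carr \<Longrightarrow> y \<in> carr \<Longrightarrow> sub x y = zer \<longleftrightarrow> x = y"
  by (metis add_sub_cancel sub_self zero_add)

lemma eq_add_iff: "w \<in> carr \<Longrightarrow> x \<in> carr \<Longrightarrow> i \<in> carr \<Longrightarrow> w = add x i \<longleftrightarrow> i = sub w x"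
  by (metis add_comm add_sub_cancel sub_add_cancel sub_closed)

lemma sub_trans: "w \<in> carr \<Longrightarrow> x \<in> carr \<Longrightarrow> y \<in> carr \<Longrightarrow> sub w x = add (sub w y) (sub y x)"
  unfolding sub_def
  by (smt (verit, ccfv_threshold) add_assoc add_closed add_comm add_neg add_zero sm_closed)

lemma neg_sub: "x \<in> carr \<Longrightarrow> y \<in> carr \<Longrightarrow> sub x y = sm (-1) (sub y x)"
  unfolding sub_def by (simp add: sm_add_vec add_comm)

lemma sub_add_add: "a \<in> carr \<Longrightarrow> b \<in> carr \<Longrightarrow> c \<in> carr \<Longrightarrow> d \<in> carr \<Longrightarrow>
   sub (add a b) (add c d) = add (sub a c) (sub b d)"
  unfolding sub_def using sm_add_vec add_assoc add_left_comm by (simp add: sm_add_vec add_assoc add_left_comm)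

lemma sub_sm: "a \<in> carr \<Longrightarrow> c \<in> carr \<Longrightarrow> sub (sm k a) (sm k c) = sm k (sub a c)"
  unfolding sub_def by (simp add: sm_add_vec mult.commute)

lemma subspace_carr: "subspace L carr" by (auto simp: subspace_def)

lemma subspace_sub: "subspace L S \<Longrightarrow> x \<in> S \<Longrightarrow> y \<in> S \<Longrightarrow> sub x y \<in> S"
  by (simp add: subspace_def sub_def)

lemma subspace_sm: "subspace L S \<Longrightarrow> x \<in> S \<Longrightarrow> sm c x \<in> S" by (simp add: subspace_def)
lemma subspace_add: "subspace L S \<Longrightarrow> x \<in> S \<Longrightarrow> y \<in> S \<Longrightarrow> add x y \<in> S" by (simp add: subspace_def)
lemma subspace_zero: "subspace L S \<Longrightarrow> zer \<in> S" by (simp add: subspace_def)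
lemma subspace_sub_carr: "subspace L S \<Longrightarrow> S \<subseteq> carr" by (simp add: subspace_def)

lemma sub_sub_mem: "subspace L S \<Longrightarrow> x \<in> carr \<Longrightarrow> y \<in> carr \<Longrightarrow> sub x y \<in> S \<Longrightarrow> sub y x \<in> S"
  using neg_sub subspace_sm by metis

lemma lspan_subspace: "A \<subseteq> carr \<Longrightarrow> subspace L (lspan L A)"
  unfolding lspan_def subspace_def using subspace_carr[unfolded subspace_def]
  by (auto simp: subspace_def)

lemma lspan_sub: "A \<subseteq> lspan L A" unfolding lspan_def by blast
lemma lspan_min: "subspace L T \<Longrightarrow> A \<subseteq> T \<Longrightarrow> lspan L A \<subseteq> T" unfolding lspan_def by blast
lemma lspan_carr: "A \<subseteq> carr \<Longrightarrow> lspan L A \<subseteq> carr" using lspan_min subspace_carr by blast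

definition hsum :: "('b \<Rightarrow> 'a) \<Rightarrow> 'b set \<Rightarrow> 'a" where
  "hsum f A = Finite_Set.fold (\<lambda>x acc. if acc \<in> carr then add (f x) acc else acc) zer A"

lemma hsum_cfc: "comp_fun_commute_on {x. f x \<in> carr} (\<lambda>x acc. if acc \<in> carr then add (f x) acc else acc)"
  by unfold_locales (auto simp: fun_eq_iff add_left_comm)

lemma hsum_empty[simp]: "hsum f {} = zer" by (simp add: hsum_def)

lemma hsum_closed_insert:
  assumes "finite A" "f ` A \<subseteq> carr"
  shows "hsum f A \<in> carr \<and> (\<forall>x. f x \<in> carr \<longrightarrow> x \<notin> A \<longrightarrow> hsum f (insert x A) = add (f x) (hsum f A))"
  using assms
proof (induction A rule: finite_induct)
  case empty
  interpret comp_fun_commute_on "{x. f x \<in> carr}" "\<lambda>x acc. if acc \<in> carr then add (f x) acc else acc"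
    by (rule hsum_cfc)
  show ?case by (auto simp: hsum_def)
next
  case (insert y A)
  interpret comp_fun_commute_on "{x. f x \<in> carr}" "\<lambda>x acc. if acc \<in> carr then add (f x) acc else acc"
    by (rule hsum_cfc)
  have c: "hsum f A \<in> carr" using insert by auto
  have i: "hsum f (insert y A) = add (f y) (hsum f A)"
    using insert c unfolding hsum_def by (subst fold_insert) auto
  then have c2: "hsum f (insert y A) \<in> carr" using c insert by auto
  show ?case
  proof (intro conjI allI impI)
    fix x assume x: "f x \<in> carr" "x \<notin> insert y A"
    show "hsum f (insert x (insert y A)) = add (f x) (hsum f (insert y A))"
      using insert x c2 unfolding hsum_def by (subst fold_insert) auto
  qed (rule c2)
qed

lemma hsum_closed[simp, intro]: "finite A \<Longrightarrow> f ` A \<subseteq> carr \<Longrightarrow> hsum f A \<in> carr"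
  using hsum_closed_insert by blast

lemma hsum_insert: "finite A \<Longrightarrow> f ` A \<subseteq> carr \<Longrightarrow> f x \<in> carr \<Longrightarrow> x \<notin> A \<Longrightarrow>
   hsum f (insert x A) = add (f x) (hsum f A)"
  using hsum_closed_insert by blast

lemma hsum_insert2: "finite A \<Longrightarrow> x \<notin> A \<Longrightarrow> (\<And>y. y \<in> insert x A \<Longrightarrow> f y \<in> carr) \<Longrightarrow>
   hsum f (insert x A) = add (f x) (hsum f A)"
  by (rule hsum_insert) auto

lemma hsum_closed2[simp, intro]: "finite A \<Longrightarrow> (\<And>y. y \<in> A \<Longrightarrow> f y \<in> carr) \<Longrightarrow> hsum f A \<in> carr"
  by (rule hsum_closed) auto

lemma hsum_cong: "finite A \<Longrightarrow> f ` A \<subseteq> carr \<Longrightarrow> (\<And>x. x \<in> A \<Longrightarrow> f x = g x) \<Longrightarrow> hsum f A = hsum g A"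
proof (induction A rule: finite_induct)
  case (insert x F)
  have "hsum f (insert x F) = add (f x) (hsum f F)" using insert by (intro hsum_insert) auto
  also have "\<dots> = add (g x) (hsum g F)" using insert by auto
  also have "\<dots> = hsum g (insert x F)" using insert by (intro hsum_insert[symmetric]) auto
  finally show ?case .
qed simp

lemma hsum_zero: "finite A \<Longrightarrow> (\<And>x. x \<in> A \<Longrightarrow> f x = zer) \<Longrightarrow> hsum f A = zer"
proof (induction A rule: finite_induct)
  case (insert x F)
  then show ?case by (subst hsum_insert) auto
qed simp

lemma hsum_add: "finite A \<Longrightarrow> f ` A \<subseteq> carr \<Longrightarrow> g ` A \<subseteq> carr \<Longrightarrow>
   hsum (\<lambda>x. add (f x) (g x)) A = add (hsum f A) (hsum g A)"
proof (induction A rule: finite_induct)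
  case (insert x F)
  then have "hsum (\<lambda>x. add (f x) (g x)) (insert x F) = add (add (f x) (g x)) (hsum (\<lambda>x. add (f x) (g x)) F)"
    by (intro hsum_insert) auto
  also have "\<dots> = add (add (f x) (g x)) (add (hsum f F) (hsum g F))" using insert by simp
  also have "\<dots> = add (add (f x) (hsum f F)) (add (g x) (hsum g F))"
    using insert by (simp add: add_assoc add_left_comm)
  also have "\<dots> = add (hsum f (insert x F)) (hsum g (insert x F))"
    using insert by (simp add: hsum_insert)
  finally show ?case .
qed simp

lemma hsum_sm: "finite A \<Longrightarrow> f ` A \<subseteq> carr \<Longrightarrow> sm c (hsum f A) = hsum (\<lambda>x. sm c (f x)) A"
proof (induction A rule: finite_induct)
  case (insert x F)
  have "sm c (hsum f (insert x F)) = sm c (add (f x) (hsum f F))" using insert by (simp add: hsum_insert)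
  also have "\<dots> = add (sm c (f x)) (hsum (\<lambda>x. sm c (f x)) F)" using insert by (simp add: sm_add_vec)
  also have "\<dots> = hsum (\<lambda>x. sm c (f x)) (insert x F)" using insert by (intro hsum_insert[symmetric]) auto
  finally show ?case .
qed simp

lemma hsum_Un: "finite A \<Longrightarrow> finite B \<Longrightarrow> A \<inter> B = {} \<Longrightarrow> f ` (A \<union> B) \<subseteq> carr \<Longrightarrow>
   hsum f (A \<union> B) = add (hsum f A) (hsum f B)"
proof (induction A rule: finite_induct)
  case (insert x F)
  have "hsum f (insert x F \<union> B) = hsum f (insert x (F \<union> B))" by simp
  also have "\<dots> = add (f x) (hsum f (F \<union> B))" using insert by (intro hsum_insert) auto
  also have "\<dots> = add (f x) (add (hsum f F) (hsum f B))" using insert by auto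
  also have "\<dots> = add (add (f x) (hsum f F)) (hsum f B)"
    using insert by (subst add_assoc) (auto intro!: hsum_closed2)
  also have "add (f x) (hsum f F) = hsum f (insert x F)"
    using insert by (intro hsum_insert[symmetric]) auto
  finally show ?case .
qed simp

lemma hsum_superset: "finite B \<Longrightarrow> A \<subseteq> B \<Longrightarrow> f ` B \<subseteq> carr \<Longrightarrow> (\<And>x. x \<in> B - A \<Longrightarrow> f x = zer) \<Longrightarrow>
   hsum f A = hsum f B"
proof -
  assume a: "finite B" "A \<subseteq> B" "f ` B \<subseteq> carr" "\<And>x. x \<in> B - A \<Longrightarrow> f x = zer"
  have "B = A \<union> (B - A)" using a by auto
  then have "hsum f B = add (hsum f A) (hsum f (B - A))"
    using a by (metis Diff_disjoint finite_Diff finite_subset hsum_Un)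
  also have "hsum f (B - A) = zer" using a by (intro hsum_zero) auto
  finally show ?thesis using a by (metis add_zero finite_subset hsum_closed image_mono order_trans)
qed

lemma hsum_swap: "finite A \<Longrightarrow> finite B \<Longrightarrow> (\<And>x y. x \<in> A \<Longrightarrow> y \<in> B \<Longrightarrow> f x y \<in> carr) \<Longrightarrow>
  hsum (\<lambda>x. hsum (\<lambda>y. f x y) B) A = hsum (\<lambda>y. hsum (\<lambda>x. f x y) A) B"
proof (induction A rule: finite_induct)
  case empty then show ?case by (simp add: hsum_zero)
next
  case (insert a F)
  have "hsum (\<lambda>x. hsum (f x) B) (insert a F) = add (hsum (f a) B) (hsum (\<lambda>x. hsum (f x) B) F)"
    using insert by (intro hsum_insert) auto
  also have "\<dots> = add (hsum (f a) B) (hsum (\<lambda>y. hsum (\<lambda>x. f x y) F) B)" using insert by simp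
  also have "\<dots> = hsum (\<lambda>y. add (f a y) (hsum (\<lambda>x. f x y) F)) B"
    using insert by (subst hsum_add) auto
  also have "\<dots> = hsum (\<lambda>y. hsum (\<lambda>x. f x y) (insert a F)) B"
  proof (rule hsum_cong)
    fix y assume y: "y \<in> B"
    show "add (f a y) (hsum (\<lambda>x. f x y) F) = hsum (\<lambda>x. f x y) (insert a F)"
      using insert y by (intro hsum_insert2[symmetric]) auto
  qed (use insert in auto)
  finally show ?case .
qed

lemma sm_sum_scalar: "finite A \<Longrightarrow> x \<in> carr \<Longrightarrow> sm (\<Sum>u\<in>A. c u) x = hsum (\<lambda>u. sm (c u) x) A"
proof (induction A rule: finite_induct)
  case (insert a F)
  then show ?case by (subst hsum_insert2) (auto simp: sm_add_scalar)
qed simp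

end


locale LB = VS +
  assumes LB: "leibniz L"
begin

abbreviation "br \<equiv> lbr L"

lemma br_closed[simp, intro]: "x \<in> carr \<Longrightarrow> y \<in> carr \<Longrightarrow> br x y \<in> carr"
  using LB unfolding leibniz_def by auto
lemma br_add1: "x \<in> carr \<Longrightarrow> y \<in> carr \<Longrightarrow> z \<in> carr \<Longrightarrow> br (add x y) z = add (br x z) (br y z)"
  using LB unfolding leibniz_def by auto
lemma br_add2: "x \<in> carr \<Longrightarrow> y \<in> carr \<Longrightarrow> z \<in> carr \<Longrightarrow> br z (add x y) = add (br z x) (br z y)"
  using LB unfolding leibniz_def by auto
lemma br_sm1: "x \<in> carr \<Longrightarrow> y \<in> carr \<Longrightarrow> br (sm c x) y = sm c (br x y)"
  using LB unfolding leibniz_def by auto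
lemma br_sm2: "x \<in> carr \<Longrightarrow> y \<in> carr \<Longrightarrow> br x (sm c y) = sm c (br x y)"
  using LB unfolding leibniz_def by auto
lemma leib: "x \<in> carr \<Longrightarrow> y \<in> carr \<Longrightarrow> z \<in> carr \<Longrightarrow> br x (br y z) = sub (br (br x y) z) (br (br x z) y)"
  using LB unfolding leibniz_def sub_def by auto

lemma br_zero1[simp]: "y \<in> carr \<Longrightarrow> br zer y = zer"
  using br_sm1[of zer y 0] by simp
lemma br_zero2[simp]: "y \<in> carr \<Longrightarrow> br y zer = zer"
  using br_sm2[of y zer 0] by simp

lemma br_sub1: "x \<in> carr \<Longrightarrow> y \<in> carr \<Longrightarrow> z \<in> carr \<Longrightarrow> br (sub x y) z = sub (br x z) (br y z)"
  unfolding sub_def by (simp add: br_add1 br_sm1)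
lemma br_sub2: "x \<in> carr \<Longrightarrow> y \<in> carr \<Longrightarrow> z \<in> carr \<Longrightarrow> br z (sub x y) = sub (br z x) (br z y)"
  unfolding sub_def by (simp add: br_add2 br_sm2)

lemma br_hsum1: "finite A \<Longrightarrow> (\<And>x. x \<in> A \<Longrightarrow> f x \<in> carr) \<Longrightarrow> y \<in> carr \<Longrightarrow>
   br (hsum f A) y = hsum (\<lambda>x. br (f x) y) A"
proof (induction A rule: finite_induct)
  case (insert a F)
  have "br (hsum f (insert a F)) y = br (add (f a) (hsum f F)) y" using insert by (subst hsum_insert2) auto
  also have "\<dots> = add (br (f a) y) (br (hsum f F) y)" using insert by (intro br_add1) auto
  also have "\<dots> = hsum (\<lambda>x. br (f x) y) (insert a F)" using insert by (subst hsum_insert2) auto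
  finally show ?case .
qed simp

lemma br_hsum2: "finite A \<Longrightarrow> (\<And>x. x \<in> A \<Longrightarrow> f x \<in> carr) \<Longrightarrow> y \<in> carr \<Longrightarrow>
   br y (hsum f A) = hsum (\<lambda>x. br y (f x)) A"
proof (induction A rule: finite_induct)
  case (insert a F)
  have "br y (hsum f (insert a F)) = br y (add (f a) (hsum f F))" using insert by (subst hsum_insert2) auto
  also have "\<dots> = add (br y (f a)) (br y (hsum f F))" using insert by (intro br_add2) auto
  also have "\<dots> = hsum (\<lambda>x. br y (f x)) (insert a F)" using insert by (subst hsum_insert2) auto
  finally show ?case .
qed simp

lemma gens_carr: "A \<subseteq> carr \<Longrightarrow> B \<subseteq> carr \<Longrightarrow> {add (br m n) (br n m) | m n. m \<in> A \<and> n \<in> B} \<subseteq> carr"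
  by (auto intro!: add_closed br_closed)

lemma lie_br_carr: "A \<subseteq> carr \<Longrightarrow> B \<subseteq> carr \<Longrightarrow> lie_br L A B \<subseteq> carr"
  unfolding lie_br_def by (rule lspan_carr[OF gens_carr])

lemma lie_br_subspace: "A \<subseteq> carr \<Longrightarrow> B \<subseteq> carr \<Longrightarrow> subspace L (lie_br L A B)"
  unfolding lie_br_def by (rule lspan_subspace[OF gens_carr])

lemma lie_br_gen: "m \<in> A \<Longrightarrow> n \<in> B \<Longrightarrow> add (br m n) (br n m) \<in> lie_br L A B"
proof -
  assume "m \<in> A" "n \<in> B"
  then have "add (br m n) (br n m) \<in> {add (br m n) (br n m) | m n. m \<in> A \<and> n \<in> B}" by auto
  then show ?thesis unfolding lie_br_def by (rule subsetD[OF lspan_sub])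
qed

lemma lie_br_min: "subspace L T \<Longrightarrow> (\<And>m n. m \<in> A \<Longrightarrow> n \<in> B \<Longrightarrow> add (br m n) (br n m) \<in> T) \<Longrightarrow>
   lie_br L A B \<subseteq> T"
  unfolding lie_br_def by (rule lspan_min) (auto simp del: supp_iff)

lemma lie_br_mono: "A \<subseteq> carr \<Longrightarrow> B \<subseteq> carr \<Longrightarrow> A \<subseteq> A' \<Longrightarrow> B \<subseteq> B' \<Longrightarrow> A' \<subseteq> carr \<Longrightarrow> B' \<subseteq> carr \<Longrightarrow>
   lie_br L A B \<subseteq> lie_br L A' B'"
proof (rule lie_br_min)
  assume "A \<subseteq> carr" "B \<subseteq> carr" "A \<subseteq> A'" "B \<subseteq> B'" "A' \<subseteq> carr" "B' \<subseteq> carr"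
  then show "subspace L (lie_br L A' B')" by (intro lie_br_subspace)
  fix m n assume "m \<in> A" "n \<in> B"
  then show "add (br m n) (br n m) \<in> lie_br L A' B'" using \<open>A \<subseteq> A'\<close> \<open>B \<subseteq> B'\<close> by (intro lie_br_gen) auto
qed

lemma ann_subspace: "subspace L {y \<in> carr. \<forall>x\<in>carr. br x y = zer}"
  unfolding subspace_def by (auto simp: br_add2 br_sm2)

lemma lie_ann: "x \<in> carr \<Longrightarrow> y \<in> lie_br L carr carr \<Longrightarrow> br x y = zer"
proof -
  assume x: "x \<in> carr" and y: "y \<in> lie_br L carr carr"
  have "lie_br L carr carr \<subseteq> {y \<in> carr. \<forall>x\<in>carr. br x y = zer}"
  proof (rule lie_br_min[OF ann_subspace])
    fix m n assume mn: "m \<in> carr" "n \<in> carr"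
    show "add (br m n) (br n m) \<in> {y \<in> carr. \<forall>x\<in>carr. br x y = zer}"
    proof (safe)
      fix x assume x: "x \<in> carr"
      have "br x (add (br m n) (br n m)) = add (br x (br m n)) (br x (br n m))"
        using mn x by (simp add: br_add2)
      also have "\<dots> = add (sub (br (br x m) n) (br (br x n) m)) (sub (br (br x n) m) (br (br x m) n))"
        using mn x by (simp add: leib)
      also have "\<dots> = zer"
      proof -
        have "sub (br (br x n) m) (br (br x m) n) = sm (-1) (sub (br (br x m) n) (br (br x n) m))"
          using mn x by (intro neg_sub) auto
        then show ?thesis using mn x by (simp add: add_neg)
      qed
      finally show "br x (add (br m n) (br n m)) = zer" .
    qed (use mn in auto)
  qed
  then show ?thesis using x y by auto
qed

lemma ideal_subspace: "ideal L I \<Longrightarrow> subspace L I" by (simp add: ideal_def)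

context
  fixes I assumes I: "ideal L I"
begin

lemma I_sub: "subspace L I" using I by (simp add: ideal_def)
lemma I_carr: "I \<subseteq> carr" using I_sub subspace_sub_carr by blast

lemma coset_mem: "x \<in> carr \<Longrightarrow> w \<in> coset L I x \<longleftrightarrow> w \<in> carr \<and> sub w x \<in> I"
proof -
  assume x: "x \<in> carr"
  have "w \<in> carr \<Longrightarrow> (\<exists>i\<in>I. w = add x i) \<longleftrightarrow> sub w x \<in> I"
  proof -
    assume w: "w \<in> carr"
    have "(\<exists>i\<in>I. w = add x i) \<longleftrightarrow> (\<exists>i\<in>I. i = sub w x)"
      using eq_add_iff[OF w x] I_carr by (intro bex_cong refl) auto
    then show ?thesis by simp
  qed
  then show ?thesis unfolding coset_def by blast
qed

lemma coset_self: "x \<in> carr \<Longrightarrow> x \<in> coset L I x"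
proof -
  assume x: "x \<in> carr"
  show ?thesis unfolding coset_mem[OF x] using x subspace_zero[OF I_sub] by simp
qed

lemma coset_eq: "x \<in> carr \<Longrightarrow> y \<in> carr \<Longrightarrow> coset L I x = coset L I y \<longleftrightarrow> sub x y \<in> I"
proof
  assume x: "x \<in> carr" "y \<in> carr" "coset L I x = coset L I y"
  then have "x \<in> coset L I y" using coset_self by metis
  then show "sub x y \<in> I" using coset_mem[OF x(2)] by simp
next
  assume x: "x \<in> carr" "y \<in> carr" and d: "sub x y \<in> I"
  have d2: "sub y x \<in> I" using sub_sub_mem[OF I_sub] x d by blast
  show "coset L I x = coset L I y"
  proof (rule set_eqI)
    fix w
    show "w \<in> coset L I x \<longleftrightarrow> w \<in> coset L I y"
    proof (cases "w \<in> carr")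
      case True
      have e1: "sub w x = add (sub w y) (sub y x)" using sub_trans True x by blast
      have e2: "sub w y = add (sub w x) (sub x y)" using sub_trans True x by blast
      have "sub w x \<in> I \<longleftrightarrow> sub w y \<in> I"
      proof
        assume "sub w x \<in> I" then show "sub w y \<in> I" unfolding e2 using d by (rule subspace_add[OF I_sub])
      next
        assume "sub w y \<in> I" then show "sub w x \<in> I" unfolding e1 using d2 by (rule subspace_add[OF I_sub])
      qed
      then show ?thesis using True by (simp add: coset_mem[OF x(1)] coset_mem[OF x(2)])
    next
      case False then show ?thesis by (simp add: coset_mem[OF x(1)] coset_mem[OF x(2)])
    qed
  qed
qed

lemma coset_some: "x \<in> carr \<Longrightarrow> (SOME w. w \<in> coset L I x) \<in> carr \<and> sub (SOME w. w \<in> coset L I x) x \<in> I"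
proof -
  assume x: "x \<in> carr"
  have "(SOME w. w \<in> coset L I x) \<in> coset L I x" using coset_self[OF x] by (rule someI)
  then show ?thesis unfolding coset_mem[OF x] .
qed

lemma quot_add: "x \<in> carr \<Longrightarrow> y \<in> carr \<Longrightarrow> ladd (quot L I) (coset L I x) (coset L I y) = coset L I (add x y)"
proof -
  assume x: "x \<in> carr" "y \<in> carr"
  define x' where "x' = (SOME w. w \<in> coset L I x)"
  define y' where "y' = (SOME w. w \<in> coset L I y)"
  have h: "x' \<in> carr" "sub x' x \<in> I" "y' \<in> carr" "sub y' y \<in> I"
    using coset_some[OF x(1)] coset_some[OF x(2)] unfolding x'_def y'_def by auto
  have "coset L I (add x' y') = coset L I (add x y)"
    using h x by (simp add: coset_eq sub_add_add subspace_add[OF I_sub])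
  then show ?thesis by (simp add: quot_def x'_def y'_def)
qed

lemma quot_sm: "x \<in> carr \<Longrightarrow> lsmult (quot L I) c (coset L I x) = coset L I (sm c x)"
proof -
  assume x: "x \<in> carr"
  define x' where "x' = (SOME w. w \<in> coset L I x)"
  have h: "x' \<in> carr" "sub x' x \<in> I" using coset_some[OF x] unfolding x'_def by auto
  have "coset L I (sm c x') = coset L I (sm c x)"
    using h x by (simp add: coset_eq sub_sm subspace_sm[OF I_sub])
  then show ?thesis by (simp add: quot_def x'_def)
qed

lemma quot_br: "x \<in> carr \<Longrightarrow> y \<in> carr \<Longrightarrow> lbr (quot L I) (coset L I x) (coset L I y) = coset L I (br x y)"
proof -
  assume x: "x \<in> carr" "y \<in> carr"
  define x' where "x' = (SOME w. w \<in> coset L I x)"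
  define y' where "y' = (SOME w. w \<in> coset L I y)"
  have h: "x' \<in> carr" "sub x' x \<in> I" "y' \<in> carr" "sub y' y \<in> I"
    using coset_some[OF x(1)] coset_some[OF x(2)] unfolding x'_def y'_def by auto
  have e: "sub (br x' y') (br x y) = add (br (sub x' x) y') (br x (sub y' y))"
  proof -
    have "sub (br x' y') (br x y) = add (sub (br x' y') (br x y')) (sub (br x y') (br x y))"
      using h x by (intro sub_trans) auto
    also have "sub (br x' y') (br x y') = br (sub x' x) y'" using h x by (simp add: br_sub1)
    also have "sub (br x y') (br x y) = br x (sub y' y)" using h x by (simp add: br_sub2)
    finally show ?thesis .
  qed
  have "br (sub x' x) y' \<in> I" "br x (sub y' y) \<in> I" using I h x unfolding ideal_def by auto
  then have "coset L I (br x' y') = coset L I (br x y)"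
    using h x e by (simp add: coset_eq subspace_add[OF I_sub])
  then show ?thesis by (simp add: quot_def x'_def y'_def)
qed

lemma quot_zero: "lzero (quot L I) = coset L I zer" by (simp add: quot_def)
lemma quot_carr: "lcarrier (quot L I) = coset L I ` carr" by (simp add: quot_def)

lemma quot_ball: "(\<forall>X\<in>lcarrier (quot L I). P X) \<longleftrightarrow> (\<forall>x\<in>carr. P (coset L I x))"
  by (simp add: quot_carr)

lemma leibniz_quot: "leibniz (quot L I)"
  unfolding leibniz_def vector_space_on_def quot_ball
  apply (simp add: quot_add quot_sm quot_br quot_zero quot_carr)
  apply (intro conjI ballI allI)
  apply (simp_all add: add_assoc add_neg sm_add_scalar sm_add_vec br_add1 br_add2 br_sm1 br_sm2)
   apply (metis add_comm)
  apply (simp add: leib sub_def)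
  done

end

end


lemma leibniz_subalg:
  assumes L: "leibniz L" and S: "subspace L S" and cl: "\<And>x y. x \<in> S \<Longrightarrow> y \<in> S \<Longrightarrow> lbr L x y \<in> S"
  shows "leibniz (subalg L S)"
proof -
  interpret LB L using L by (simp add: LB_def VS_def LB_axioms_def leibniz_def)
  have SC: "\<And>x. x \<in> S \<Longrightarrow> x \<in> carr" using S by (auto simp: subspace_def)
  have Sc: "\<And>x y. x \<in> S \<Longrightarrow> y \<in> S \<Longrightarrow> add x y \<in> S" "\<And>x c. x \<in> S \<Longrightarrow> sm c x \<in> S" "zer \<in> S"
    using S by (auto simp: subspace_def)
  show ?thesis
    unfolding leibniz_def vector_space_on_def subalg_def
    apply (simp add: Sc cl)
    apply (intro conjI ballI allI)
    apply (simp_all add: SC add_assoc add_neg sm_add_scalar sm_add_vec br_add1 br_add2 br_sm1 br_sm2 leib[unfolded sub_def])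
    apply (metis SC add_comm)
    done
qed


lemma hom_comp: "hom L1 L2 f \<Longrightarrow> hom L2 L3 g \<Longrightarrow> hom L1 L3 (g \<circ> f)"
  unfolding hom_def by auto

lemma LB_I: "leibniz L \<Longrightarrow> LB L"
  by (simp add: LB_def VS_def LB_axioms_def leibniz_def)

locale HM = P: LB L1 + Q: LB L2 for L1 :: "('k::field, 'a) leib" and L2 :: "('k, 'b) leib" +
  fixes h :: "'a \<Rightarrow> 'b"
  assumes H: "hom L1 L2 h"
begin

lemma h_carr[simp, intro]: "x \<in> P.carr \<Longrightarrow> h x \<in> Q.carr" using H by (simp add: hom_def)
lemma h_add: "x \<in> P.carr \<Longrightarrow> y \<in> P.carr \<Longrightarrow> h (P.add x y) = Q.add (h x) (h y)" using H by (simp add: hom_def)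
lemma h_sm: "x \<in> P.carr \<Longrightarrow> h (P.sm c x) = Q.sm c (h x)" using H by (simp add: hom_def)
lemma h_br: "x \<in> P.carr \<Longrightarrow> y \<in> P.carr \<Longrightarrow> h (P.br x y) = Q.br (h x) (h y)" using H by (simp add: hom_def)
lemma h_zero[simp]: "h P.zer = Q.zer"
  using h_sm[of P.zer 0] by simp
lemma h_sub: "x \<in> P.carr \<Longrightarrow> y \<in> P.carr \<Longrightarrow> h (P.sub x y) = Q.sub (h x) (h y)"
  by (simp add: P.sub_def Q.sub_def h_add h_sm)

lemma preimage_subspace: "subspace L2 T \<Longrightarrow> subspace L1 {x \<in> P.carr. h x \<in> T}"
  unfolding subspace_def by (auto simp: h_add h_sm)

lemma image_subspace: "subspace L1 S \<Longrightarrow> subspace L2 (h ` S)"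
proof -
  assume S: "subspace L1 S"
  have SC: "S \<subseteq> P.carr" using S by (simp add: subspace_def)
  have z: "Q.zer \<in> h ` S" using P.subspace_zero[OF S] h_zero by (metis image_eqI)
  have a: "Q.add x y \<in> h ` S" if xin: "x \<in> h ` S" and yin: "y \<in> h ` S" for x y
  proof -
    obtain x0 where x0: "x0 \<in> S" "x = h x0" using xin by blast
    obtain y0 where y0: "y0 \<in> S" "y = h y0" using yin by blast
    note xy = x0(1) y0(1) x0(2) y0(2)
    have "P.add x0 y0 \<in> S" using P.subspace_add[OF S xy(1,2)] .
    moreover have "h (P.add x0 y0) = Q.add x y" using xy SC by (simp add: h_add subsetD)
    ultimately show ?thesis by (metis image_eqI)
  qed
  have m: "Q.sm c x \<in> h ` S" if xin: "x \<in> h ` S" for x c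
  proof -
    obtain x0 where xy: "x0 \<in> S" "x = h x0" using xin by blast
    have "P.sm c x0 \<in> S" using P.subspace_sm[OF S xy(1)] .
    moreover have "h (P.sm c x0) = Q.sm c x" using xy SC by (simp add: h_sm subsetD)
    ultimately show ?thesis by (metis image_eqI)
  qed
  have "h ` S \<subseteq> Q.carr" using SC by auto
  then show ?thesis unfolding subspace_def using z a m by blast
qed

lemma hom_lie_br:
  assumes "A \<subseteq> P.carr" "B \<subseteq> P.carr" "h ` A \<subseteq> A'" "h ` B \<subseteq> B'" "A' \<subseteq> Q.carr" "B' \<subseteq> Q.carr"
  shows "h ` lie_br L1 A B \<subseteq> lie_br L2 A' B'"
proof -
  have "lie_br L1 A B \<subseteq> {x \<in> P.carr. h x \<in> lie_br L2 A' B'}"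
  proof (rule P.lie_br_min)
    show "subspace L1 {x \<in> P.carr. h x \<in> lie_br L2 A' B'}"
      using assms by (intro preimage_subspace Q.lie_br_subspace)
    fix m n assume mn: "m \<in> A" "n \<in> B"
    then have c: "m \<in> P.carr" "n \<in> P.carr" using assms by auto
    have "h (P.add (P.br m n) (P.br n m)) = Q.add (Q.br (h m) (h n)) (Q.br (h n) (h m))"
      using c by (simp add: h_add h_br)
    also have "\<dots> \<in> lie_br L2 A' B'" using mn assms by (intro Q.lie_br_gen) auto
    finally show "P.add (P.br m n) (P.br n m) \<in> {x \<in> P.carr. h x \<in> lie_br L2 A' B'}" using c by auto
  qed
  then show ?thesis by auto
qed

lemma lie_br_surj:
  assumes "h ` P.carr = Q.carr"
  shows "lie_br L2 Q.carr Q.carr \<subseteq> h ` lie_br L1 P.carr P.carr"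
proof (rule Q.lie_br_min)
  show "subspace L2 (h ` lie_br L1 P.carr P.carr)"
    by (intro image_subspace P.lie_br_subspace) auto
  fix m n assume mn: "m \<in> Q.carr" "n \<in> Q.carr"
  then obtain m0 n0 where c: "m0 \<in> P.carr" "n0 \<in> P.carr" "m = h m0" "n = h n0" using assms by (metis imageE)
  have "Q.add (Q.br m n) (Q.br n m) = h (P.add (P.br m0 n0) (P.br n0 m0))"
    using c by (simp add: h_add h_br)
  moreover have "P.add (P.br m0 n0) (P.br n0 m0) \<in> lie_br L1 P.carr P.carr" using c by (intro P.lie_br_gen)
  ultimately show "Q.add (Q.br m n) (Q.br n m) \<in> h ` lie_br L1 P.carr P.carr" by auto
qed

lemma preimage_ideal: "ideal L2 T \<Longrightarrow> ideal L1 {x \<in> P.carr. h x \<in> T}"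
proof -
  assume T: "ideal L2 T"
  have s: "subspace L1 {x \<in> P.carr. h x \<in> T}" using T by (intro preimage_subspace) (simp add: ideal_def)
  have b: "P.br x i \<in> {x \<in> P.carr. h x \<in> T} \<and> P.br i x \<in> {x \<in> P.carr. h x \<in> T}"
    if "x \<in> P.carr" "i \<in> {x \<in> P.carr. h x \<in> T}" for x i
  proof -
    have "h x \<in> Q.carr" "h i \<in> T" "i \<in> P.carr" using that by auto
    then have "Q.br (h x) (h i) \<in> T" "Q.br (h i) (h x) \<in> T" using T unfolding ideal_def by blast+
    then show ?thesis using that by (simp add: h_br)
  qed
  show ?thesis unfolding ideal_def using s b by blast
qed

lemma kernel_ideal: "ideal L1 {x \<in> P.carr. h x = Q.zer}"
proof -
  have "ideal L2 {Q.zer}" unfolding ideal_def subspace_def by auto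
  from preimage_ideal[OF this] show ?thesis by simp
qed

end


lemma free_carr: "lcarrier (free_leib X) = {a. fin a \<and> (\<forall>w\<in>supp a. w \<noteq> [] \<and> set w \<subseteq> X)}"
  by (simp add: free_leib_def)
lemma free_add: "ladd (free_leib X) = (\<lambda>a b. a + b)" by (simp add: free_leib_def fun_eq_iff)
lemma free_sm: "lsmult (free_leib X) = (\<lambda>c a w. c * a w)" by (simp add: free_leib_def)
lemma free_zero: "lzero (free_leib X) = 0" by (simp add: free_leib_def fun_eq_iff)

lemma free_carr_NE: "a \<in> lcarrier (free_leib X) \<Longrightarrow> NE a"
  by (auto simp: free_carr NE_def)

lemma BR_carr: fixes a b :: "'x list \<Rightarrow> 'k::field" assumes "a \<in> lcarrier (free_leib X)" "b \<in> lcarrier (free_leib X)"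
  shows "BR a b \<in> lcarrier (free_leib X)"
proof -
  have f: "fin (BR a b)" using assms by (intro fin_BR) (auto simp: free_carr)
  have "w \<noteq> [] \<and> set w \<subseteq> X" if w: "w \<in> supp (BR a b)" for w
  proof -
    obtain u v where uv: "u \<in> supp a" "v \<in> supp b" "w \<in> supp (wbr u v :: _ \<Rightarrow> 'k)"
      using supp_BR[of a b] w by blast
    have "length w = length u + length v \<and> set w \<subseteq> set u \<union> set v" using wbr_supp[OF uv(3)] .
    moreover have "v \<noteq> []" "set u \<subseteq> X" "set v \<subseteq> X" using uv(1,2) assms by (auto simp: free_carr simp del: supp_iff)
    ultimately show ?thesis by auto
  qed
  then show ?thesis using f by (simp add: free_carr del: supp_iff)
qed

lemma leibniz_free: "leibniz (free_leib X :: ('k::field, 'x list \<Rightarrow> 'k) leib)"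
proof -
  let ?C = "lcarrier (free_leib X :: ('k, 'x list \<Rightarrow> 'k) leib)"
  have fin: "a \<in> ?C \<Longrightarrow> fin a" for a by (simp add: free_carr)
  have addc: "a \<in> ?C \<Longrightarrow> b \<in> ?C \<Longrightarrow> a + b \<in> ?C" for a b
    using supp_add[of a b] by (auto simp: free_carr fin_add simp del: supp_iff)
  have smc: "a \<in> ?C \<Longrightarrow> (\<lambda>w. c * a w) \<in> ?C" for a c
    using supp_smult[of c a] by (auto simp: free_carr fin_smult simp del: supp_iff)
  have zc: "(0::_ \<Rightarrow> 'k) \<in> ?C" by (simp add: free_carr)
  have vs: "vector_space_on (free_leib X :: ('k, 'x list \<Rightarrow> 'k) leib)"
    unfolding vector_space_on_def free_add free_sm free_zero
    using addc smc zc by (auto simp: algebra_simps fun_eq_iff)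
  have l: "BR x (BR y z) = (\<lambda>w. BR (BR x y) z w + (-1) * BR (BR x z) y w)"
    if "x \<in> ?C" "y \<in> ?C" "z \<in> ?C" for x y z
    using leib_free[OF fin[OF that(1)] free_carr_NE[OF that(2)] free_carr_NE[OF that(3)]]
    by (simp add: fun_eq_iff)
  show ?thesis
    unfolding leibniz_def lbr_free free_add free_sm
    using vs BR_carr l fin
    by (auto simp: BR_add1 BR_add2 BR_smult1 BR_smult2)
qed


fun LWr :: "('k, 'b) leib \<Rightarrow> ('x \<Rightarrow> 'b) \<Rightarrow> 'x list \<Rightarrow> 'b" where
  "LWr H e [] = lzero H"
| "LWr H e [x] = e x"
| "LWr H e (v # y # ys) = lbr H (LWr H e (y # ys)) (e v)"

definition Lw :: "('k, 'b) leib \<Rightarrow> ('x \<Rightarrow> 'b) \<Rightarrow> 'x list \<Rightarrow> 'b" where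
  "Lw H e w = LWr H e (rev w)"

lemma Lw_single[simp]: "Lw H e [v] = e v" by (simp add: Lw_def)
lemma Lw_snoc: "w \<noteq> [] \<Longrightarrow> Lw H e (w @ [v]) = lbr H (Lw H e w) (e v)"
  by (cases "rev w") (auto simp: Lw_def)

context LB
begin

context
  fixes e :: "'x \<Rightarrow> _"
  assumes e: "\<And>x. e x \<in> carr"
begin

lemma Lw_carr[simp, intro]: "Lw L e w \<in> carr"
proof (induction w rule: rev_induct)
  case Nil then show ?case by (simp add: Lw_def)
next
  case (snoc x xs) then show ?case using e by (cases "xs = []") (auto simp: Lw_snoc)
qed

definition phi :: "('x list \<Rightarrow> 'a) \<Rightarrow> 'b" where
  "phi a = hsum (\<lambda>w. sm (a w) (Lw L e w)) (supp a)"

lemma phi_superset: "finite S \<Longrightarrow> supp a \<subseteq> S \<Longrightarrow> phi a = hsum (\<lambda>w. sm (a w) (Lw L e w)) S"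
  unfolding phi_def by (rule hsum_superset) auto

lemma phi_carr[simp, intro]: "fin a \<Longrightarrow> phi a \<in> carr"
  unfolding phi_def by (rule hsum_closed2) auto

lemma phi_add: "fin a \<Longrightarrow> fin b \<Longrightarrow> phi (a + b) = add (phi a) (phi b)"
proof -
  assume f: "fin a" "fin b"
  let ?S = "supp a \<union> supp b"
  have "phi (a + b) = hsum (\<lambda>w. sm ((a + b) w) (Lw L e w)) ?S"
    using f supp_add by (intro phi_superset) auto
  also have "\<dots> = hsum (\<lambda>w. add (sm (a w) (Lw L e w)) (sm (b w) (Lw L e w))) ?S"
    using f by (intro hsum_cong) (auto simp: sm_add_scalar)
  also have "\<dots> = add (hsum (\<lambda>w. sm (a w) (Lw L e w)) ?S) (hsum (\<lambda>w. sm (b w) (Lw L e w)) ?S)"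
    using f by (intro hsum_add) auto
  also have "\<dots> = add (phi a) (phi b)" using f by (simp add: phi_superset[of ?S])
  finally show ?thesis .
qed

lemma phi_sm: "fin a \<Longrightarrow> phi (\<lambda>w. c * a w) = sm c (phi a)"
proof -
  assume f: "fin a"
  have "phi (\<lambda>w. c * a w) = hsum (\<lambda>w. sm (c * a w) (Lw L e w)) (supp a)"
    using f supp_smult by (intro phi_superset) auto
  also have "\<dots> = hsum (\<lambda>w. sm c (sm (a w) (Lw L e w))) (supp a)"
    using f by (intro hsum_cong) auto
  also have "\<dots> = sm c (phi a)" unfolding phi_def using f by (intro hsum_sm[symmetric]) auto
  finally show ?thesis .
qed

lemma phi_diff: "fin a \<Longrightarrow> fin b \<Longrightarrow> phi (a - b) = sub (phi a) (phi b)"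
proof -
  assume f: "fin a" "fin b"
  have "a - b = a + (\<lambda>w. (-1) * b w)" by (simp add: fun_eq_iff)
  then have "phi (a - b) = add (phi a) (phi (\<lambda>w. (-1) * b w))"
    by (simp only:) (rule phi_add[OF f(1) fin_smult[OF f(2)]])
  also have "phi (\<lambda>w. (-1) * b w) = sm (-1) (phi b)" by (rule phi_sm[OF f(2)])
  finally show ?thesis unfolding sub_def .
qed

lemma phi_single: "phi (single_word w) = Lw L e w"
  unfolding phi_def supp_single using hsum_insert2[of "{}" w "\<lambda>wa. sm (single_word w wa) (Lw L e wa)"]
  by (simp add: single_word_def)

lemma phi_Lin:
  assumes a: "fin a" and F: "\<And>u. u \<in> supp a \<Longrightarrow> fin (F u)"
  shows "phi (Lin a F) = hsum (\<lambda>u. sm (a u) (phi (F u))) (supp a)"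
proof -
  let ?V = "\<Union>u\<in>supp a. supp (F u)"
  have fV: "finite ?V" using a F by auto
  have "phi (Lin a F) = hsum (\<lambda>w. sm (Lin a F w) (Lw L e w)) ?V"
    using fV supp_Lin by (intro phi_superset) auto
  also have "\<dots> = hsum (\<lambda>w. hsum (\<lambda>u. sm (a u * F u w) (Lw L e w)) (supp a)) ?V"
    using fV a by (intro hsum_cong) (auto simp: Lin_def sm_sum_scalar)
  also have "\<dots> = hsum (\<lambda>u. hsum (\<lambda>w. sm (a u * F u w) (Lw L e w)) ?V) (supp a)"
    using fV a by (intro hsum_swap) auto
  also have "\<dots> = hsum (\<lambda>u. sm (a u) (hsum (\<lambda>w. sm (F u w) (Lw L e w)) ?V)) (supp a)"
  proof (rule hsum_cong)
    fix u assume u: "u \<in> supp a"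
    have "hsum (\<lambda>w. sm (a u * F u w) (Lw L e w)) ?V = hsum (\<lambda>w. sm (a u) (sm (F u w) (Lw L e w))) ?V"
      using fV by (intro hsum_cong) auto
    also have "\<dots> = sm (a u) (hsum (\<lambda>w. sm (F u w) (Lw L e w)) ?V)"
      using fV by (intro hsum_sm[symmetric]) auto
    finally show "hsum (\<lambda>w. sm (a u * F u w) (Lw L e w)) ?V = sm (a u) (hsum (\<lambda>w. sm (F u w) (Lw L e w)) ?V)" .
  qed (use a fV in auto)
  also have "\<dots> = hsum (\<lambda>u. sm (a u) (phi (F u))) (supp a)"
  proof (rule hsum_cong)
    fix u assume u: "u \<in> supp a"
    have "phi (F u) = hsum (\<lambda>w. sm (F u w) (Lw L e w)) ?V" using fV u by (intro phi_superset) auto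
    then show "sm (a u) (hsum (\<lambda>w. sm (F u w) (Lw L e w)) ?V) = sm (a u) (phi (F u))" by simp
  qed (use a fV in auto)
  finally show ?thesis .
qed

lemma phi_append_letter:
  assumes c: "NE c"
  shows "phi (append_letter v c) = br (phi c) (e v)"
proof -
  have fc: "fin c" and ne: "\<And>w. w \<in> supp c \<Longrightarrow> w \<noteq> []" using c by (auto simp: NE_def)
  have "phi (append_letter v c) = phi (Lin c (\<lambda>w. single_word (w @ [v])))"
    using fc by (simp add: append_letter_Lin)
  also have "\<dots> = hsum (\<lambda>w. sm (c w) (Lw L e (w @ [v]))) (supp c)"
    using fc by (simp add: phi_Lin fin_single phi_single)
  also have "\<dots> = hsum (\<lambda>w. br (sm (c w) (Lw L e w)) (e v)) (supp c)"
    using fc ne e by (intro hsum_cong) (auto simp: Lw_snoc br_sm1)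
  also have "\<dots> = br (phi c) (e v)"
    unfolding phi_def using fc e by (intro br_hsum1[symmetric]) auto
  finally show ?thesis .
qed

lemma NE_wbr: "v \<noteq> [] \<Longrightarrow> NE (wbr u v :: _ \<Rightarrow> 'a)"
  using wbr_supp[of "[]" u v] fin_wbr[of u v] by (auto simp: NE_def)

lemma phi_wbr: "v \<noteq> [] \<Longrightarrow> u \<noteq> [] \<Longrightarrow> phi (wbr u v) = br (Lw L e u) (Lw L e v)"
proof (induction v arbitrary: u rule: rev_induct)
  case Nil then show ?case by simp
next
  case (snoc x v0)
  show ?case
  proof (cases "v0 = []")
    case True
    then show ?thesis using snoc.prems by (simp add: wbr_letter phi_single Lw_snoc)
  next
    case False
    have "phi (wbr u (v0 @ [x])) = phi (append_letter x (wbr u v0) - wbr (u @ [x]) v0)"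
      by (simp add: wbr_snoc[OF False])
    also have "\<dots> = sub (phi (append_letter x (wbr u v0))) (phi (wbr (u @ [x]) v0))"
      using NE_wbr[OF False, of u] by (intro phi_diff) (auto simp: append_letter_Lin fin_wbr NE_def intro!: fin_Lin fin_single)
    also have "phi (append_letter x (wbr u v0)) = br (br (Lw L e u) (Lw L e v0)) (e x)"
      using NE_wbr[OF False, of u] snoc.IH[OF False snoc.prems(2)] by (simp add: phi_append_letter)
    also have "phi (wbr (u @ [x]) v0) = br (br (Lw L e u) (e x)) (Lw L e v0)"
      using snoc.IH[OF False] snoc.prems by (simp add: Lw_snoc)
    also have "sub (br (br (Lw L e u) (Lw L e v0)) (e x)) (br (br (Lw L e u) (e x)) (Lw L e v0))
        = br (Lw L e u) (br (Lw L e v0) (e x))" using e by (simp add: leib)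
    also have "\<dots> = br (Lw L e u) (Lw L e (v0 @ [x]))" using False by (simp add: Lw_snoc)
    finally show ?thesis .
  qed
qed


lemma phi_BR:
  assumes a: "NE a" and b: "NE b"
  shows "phi (BR a b) = br (phi a) (phi b)"
proof -
  have fa: "fin a" and fb: "fin b" and na: "\<And>u. u \<in> supp a \<Longrightarrow> u \<noteq> []" and nb: "\<And>u. u \<in> supp b \<Longrightarrow> u \<noteq> []"
    using a b by (auto simp: NE_def)
  have "phi (BR a b) = hsum (\<lambda>u. sm (a u) (phi (Lin b (wbr u)))) (supp a)"
    unfolding BR_def using fa fb by (intro phi_Lin) (auto intro!: fin_Lin fin_wbr)
  also have "\<dots> = hsum (\<lambda>u. sm (a u) (hsum (\<lambda>v. sm (b v) (br (Lw L e u) (Lw L e v))) (supp b))) (supp a)"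
  proof (rule hsum_cong)
    fix u assume u: "u \<in> supp a"
    have "phi (Lin b (wbr u)) = hsum (\<lambda>v. sm (b v) (phi (wbr u v))) (supp b)"
      using fb by (intro phi_Lin) (auto intro: fin_wbr)
    also have "\<dots> = hsum (\<lambda>v. sm (b v) (br (Lw L e u) (Lw L e v))) (supp b)"
      using fb u na nb by (intro hsum_cong) (auto simp: phi_wbr)
    finally show "sm (a u) (phi (Lin b (wbr u))) = sm (a u) (hsum (\<lambda>v. sm (b v) (br (Lw L e u) (Lw L e v))) (supp b))"
      by simp
  qed (use fa fb in \<open>auto intro!: fin_Lin fin_wbr\<close>)
  also have "\<dots> = br (phi a) (phi b)"
  proof -
    have "br (phi a) (phi b) = hsum (\<lambda>u. br (sm (a u) (Lw L e u)) (phi b)) (supp a)"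
      unfolding phi_def[of a] using fa fb by (intro br_hsum1) auto
    also have "\<dots> = hsum (\<lambda>u. sm (a u) (hsum (\<lambda>v. sm (b v) (br (Lw L e u) (Lw L e v))) (supp b))) (supp a)"
    proof (rule hsum_cong)
      fix u assume u: "u \<in> supp a"
      have "br (sm (a u) (Lw L e u)) (phi b) = sm (a u) (br (Lw L e u) (phi b))" using fb by (simp add: br_sm1)
      also have "br (Lw L e u) (phi b) = hsum (\<lambda>v. br (Lw L e u) (sm (b v) (Lw L e v))) (supp b)"
        unfolding phi_def[of b] using fb by (intro br_hsum2) auto
      also have "\<dots> = hsum (\<lambda>v. sm (b v) (br (Lw L e u) (Lw L e v))) (supp b)"
        using fb by (intro hsum_cong) (auto simp: br_sm2)
      finally show "br (sm (a u) (Lw L e u)) (phi b) = sm (a u) (hsum (\<lambda>v. sm (b v) (br (Lw L e u) (Lw L e v))) (supp b))" .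
    qed (use fa fb in auto)
    finally show ?thesis by simp
  qed
  finally show ?thesis .
qed

lemma phi_hom: "hom (free_leib X) L phi"
  unfolding hom_def lbr_free free_add free_sm
  by (auto simp: free_carr_NE[THEN NE_fin] phi_add phi_sm phi_BR free_carr_NE)

end
end

lemma universal:
  assumes H: "leibniz H" and e: "\<And>x. x \<in> X \<Longrightarrow> e x \<in> lcarrier H"
  shows "\<exists>f. hom (free_leib X) H f \<and> (\<forall>x\<in>X. f (single_word [x]) = e x)"
proof -
  interpret LB H by (rule LB_I[OF H])
  define e' where "e' x = (if x \<in> X then e x else zer)" for x
  have e': "\<And>x. e' x \<in> carr" using e by (simp add: e'_def)
  have "hom (free_leib X) H (phi e')" by (rule phi_hom[OF e'])
  moreover have "\<forall>x\<in>X. phi e' (single_word [x]) = e x"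
    by (simp add: phi_single[OF e'] e'_def)
  ultimately show ?thesis by blast
qed

lemma unique:
  fixes f1 f2 :: "('x list \<Rightarrow> 'k::field) \<Rightarrow> 'b"
  assumes H: "vector_space_on H" and h1: "hom (free_leib X) H f1" and h2: "hom (free_leib X) H f2"
    and gen: "\<And>x. x \<in> X \<Longrightarrow> f1 (single_word [x]) = f2 (single_word [x])"
  shows "a \<in> lcarrier (free_leib X) \<Longrightarrow> f1 a = f2 a"
proof -
  interpret VS H by (rule VS.intro[OF H])
  let ?C = "lcarrier (free_leib X :: ('k, 'x list \<Rightarrow> 'k) leib)"
  have sC: "single_word w \<in> ?C" if "w \<noteq> []" "set w \<subseteq> X" for w
    using that by (simp add: free_carr supp_single)
  have words: "f1 (single_word w) = f2 (single_word w)" if "w \<noteq> []" "set w \<subseteq> X" for w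
    using that
  proof (induction w rule: rev_induct)
    case Nil then show ?case by simp
  next
    case (snoc x w0)
    show ?case
    proof (cases "w0 = []")
      case True then show ?thesis using snoc.prems gen by simp
    next
      case False
      have e: "single_word (w0 @ [x]) = lbr (free_leib X) (single_word w0) (single_word [x])"
        by (simp add: lbr_free BR_single1 Lin_single wbr_letter)
      have c: "single_word w0 \<in> ?C" "single_word [x] \<in> ?C" using snoc.prems False by (auto intro!: sC)
      have "f1 (single_word (w0 @ [x])) = lbr H (f1 (single_word w0)) (f1 (single_word [x]))"
        unfolding e using h1 c unfolding hom_def by blast
      also have "\<dots> = lbr H (f2 (single_word w0)) (f2 (single_word [x]))"
        using snoc.IH[OF False] snoc.prems gen by simp
      also have "\<dots> = f2 (single_word (w0 @ [x]))"
        unfolding e using h2 c unfolding hom_def by (metis (no_types, lifting))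
      finally show ?thesis .
    qed
  qed
  have main: "\<forall>a. a \<in> ?C \<longrightarrow> card (supp a) = n \<longrightarrow> f1 a = f2 a" for n
  proof (induction n)
    case 0
    show ?case
    proof (intro allI impI)
      fix a assume a: "a \<in> ?C" "card (supp a) = 0"
      then have "supp a = {}" by (simp add: free_carr del: supp_iff)
      then have a0: "a = lsmult (free_leib X) 0 a" by (auto simp: free_sm fun_eq_iff supp_def)
      have "f1 a = lsmult H 0 (f1 a)" using h1 a(1) unfolding hom_def by (metis a0)
      also have "\<dots> = zer" using h1 a(1) unfolding hom_def by simp
      also have "\<dots> = lsmult H 0 (f2 a)" using h2 a(1) unfolding hom_def by simp
      also have "\<dots> = f2 a" using h2 a(1) unfolding hom_def by (metis a0)
      finally show "f1 a = f2 a" .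
    qed
  next
    case (Suc n)
    show ?case
    proof (intro allI impI)
      fix a assume a: "a \<in> ?C" "card (supp a) = Suc n"
      then obtain w where w: "w \<in> supp a" by (metis card.empty ex_in_conv nat.simps(3))
      define a' where "a' = (\<lambda>v. if v = w then 0 else a v)"
      define t where "t = lsmult (free_leib X) (a w) (single_word w)"
      have fa: "fin a" and wa: "\<forall>v\<in>supp a. v \<noteq> [] \<and> set v \<subseteq> X" using a by (auto simp: free_carr simp del: supp_iff)
      have sa': "supp a' = supp a - {w}" by (auto simp: a'_def supp_def)
      have a'C: "a' \<in> ?C" using fa wa sa' by (auto simp: free_carr simp del: supp_iff)
      have ca': "card (supp a') = n" using a fa w sa' by simp
      have wC: "single_word w \<in> ?C" using wa w by (intro sC) auto
      have tC: "t \<in> ?C"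
      proof -
        interpret FL: LB "free_leib X :: ('k, 'x list \<Rightarrow> 'k) leib" by (rule LB_I[OF leibniz_free])
        show ?thesis unfolding t_def using wC by (rule FL.sm_closed)
      qed
      have ae: "a = ladd (free_leib X) a' t"
        by (auto simp: a'_def t_def free_add free_sm fun_eq_iff single_word_def)
      have d1: "f1 (ladd (free_leib X) a' t) = ladd H (f1 a') (f1 t)" using h1 a'C tC unfolding hom_def by blast
      have d2: "f1 t = lsmult H (a w) (f1 (single_word w))" using h1 wC unfolding hom_def t_def by blast
      have d3: "f2 (ladd (free_leib X) a' t) = ladd H (f2 a') (f2 t)" using h2 a'C tC unfolding hom_def by blast
      have d4: "f2 t = lsmult H (a w) (f2 (single_word w))" using h2 wC unfolding hom_def t_def by blast
      have "f1 a = f1 (ladd (free_leib X) a' t)" using ae by (rule arg_cong)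
      also have "\<dots> = ladd H (f1 a') (lsmult H (a w) (f1 (single_word w)))" using d1 d2 by simp
      also have "\<dots> = ladd H (f2 a') (lsmult H (a w) (f2 (single_word w)))"
        using Suc.IH a'C ca' words wa w by auto
      also have "\<dots> = f2 (ladd (free_leib X) a' t)" using d3 d4 by simp
      also have "\<dots> = f2 a" using ae[symmetric] by (rule arg_cong)
      finally show "f1 a = f2 a" .
    qed
  qed
  show "a \<in> ?C \<Longrightarrow> f1 a = f2 a" using main by blast
qed


context LB
begin

lemma subspace_Int: "subspace L S1 \<Longrightarrow> subspace L S2 \<Longrightarrow> subspace L (S1 \<inter> S2)"
  unfolding subspace_def by auto

lemma subspace_subalg: "subspace L I \<Longrightarrow> I \<subseteq> S \<Longrightarrow> subspace (subalg L S) I"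
  unfolding subspace_def subalg_def by auto

lemma schur_setup:
  assumes r: "ideal L r" and s: "ideal L s" and rs: "r \<subseteq> s"
  shows "leibniz (subalg L (s \<inter> lie_br L carr carr))"
    and "lie_br L carr r \<subseteq> r \<inter> lie_br L carr carr"
    and "ideal (subalg L (s \<inter> lie_br L carr carr)) (lie_br L carr r)"
proof -
  have rC: "r \<subseteq> carr" using r by (simp add: ideal_def subspace_def)
  have sC: "s \<subseteq> carr" using s by (simp add: ideal_def subspace_def)
  have LFs: "subspace L (lie_br L carr carr)" by (rule lie_br_subspace) auto
  have Ss: "subspace L (s \<inter> lie_br L carr carr)" using s LFs by (intro subspace_Int) (simp_all add: ideal_def)
  have LFC: "lie_br L carr carr \<subseteq> carr" by (rule lie_br_carr) auto
  show "leibniz (subalg L (s \<inter> lie_br L carr carr))"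
  proof (rule leibniz_subalg[OF LB Ss])
    fix x y assume "x \<in> s \<inter> lie_br L carr carr" "y \<in> s \<inter> lie_br L carr carr"
    then have "br x y = zer" using LFC by (intro lie_ann) auto
    then show "br x y \<in> s \<inter> lie_br L carr carr" using subspace_zero[OF Ss] by simp
  qed
  have Jr: "lie_br L carr r \<subseteq> r"
  proof (rule lie_br_min)
    show "subspace L r" using r by (simp add: ideal_def)
    fix m n assume "m \<in> carr" "n \<in> r"
    then show "add (br m n) (br n m) \<in> r" using r unfolding ideal_def by (auto intro: subspace_add)
  qed
  have JL: "lie_br L carr r \<subseteq> lie_br L carr carr" using rC by (intro lie_br_mono) auto
  show J: "lie_br L carr r \<subseteq> r \<inter> lie_br L carr carr" using Jr JL by auto
  have Js: "subspace L (lie_br L carr r)" using rC by (intro lie_br_subspace) auto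
  show "ideal (subalg L (s \<inter> lie_br L carr carr)) (lie_br L carr r)"
    unfolding ideal_def
  proof (intro conjI ballI)
    show "subspace (subalg L (s \<inter> lie_br L carr carr)) (lie_br L carr r)"
      using Js J rs by (intro subspace_subalg) auto
    fix x i assume x: "x \<in> lcarrier (subalg L (s \<inter> lie_br L carr carr))" and i: "i \<in> lie_br L carr r"
    have xc: "x \<in> carr" "x \<in> lie_br L carr carr" using x sC by (auto simp: subalg_def)
    have ic: "i \<in> carr" "i \<in> lie_br L carr carr" using i J rC by auto
    have "br x i = zer" "br i x = zer" using xc ic by (auto intro: lie_ann)
    then show "lbr (subalg L (s \<inter> lie_br L carr carr)) x i \<in> lie_br L carr r"
      "lbr (subalg L (s \<inter> lie_br L carr carr)) i x \<in> lie_br L carr r"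
      using subspace_zero[OF Js] by (auto simp: subalg_def)
  qed
qed

end


lemma subalg_simps[simp]:
  "lcarrier (subalg L S) = S" "ladd (subalg L S) = ladd L" "lsmult (subalg L S) = lsmult L"
  "lbr (subalg L S) = lbr L" "lzero (subalg L S) = lzero L"
  by (simp_all add: subalg_def)

locale Pres = HM f g c for f :: "('k::field, 'x) leib" and g :: "('k, 'a) leib" and c +
  fixes b assumes b: "ideal g b" and surj: "c ` P.carr = Q.carr"
begin

definition "r = {a \<in> P.carr. c a = Q.zer}"
definition "s = {a \<in> P.carr. c a \<in> b}"
definition "LF = lie_br f P.carr P.carr"
definition "J = lie_br f P.carr r"
definition "S = s \<inter> LF"
definition "A = subalg f S"
definition "q = quot A J"
definition "m = coset A J ` (r \<inter> LF)"

lemma r_ideal: "ideal f r" unfolding r_def by (rule kernel_ideal)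
lemma s_ideal: "ideal f s" unfolding s_def by (rule preimage_ideal[OF b])
lemma bC: "b \<subseteq> Q.carr" using b by (simp add: ideal_def subspace_def)
lemma rs: "r \<subseteq> s" unfolding r_def s_def using b by (auto simp: ideal_def subspace_def)
lemma rC: "r \<subseteq> P.carr" unfolding r_def by auto
lemma sC: "s \<subseteq> P.carr" unfolding s_def by auto
lemma LFC: "LF \<subseteq> P.carr" unfolding LF_def by (rule P.lie_br_carr) auto
lemma SC: "S \<subseteq> P.carr" unfolding S_def using sC by auto
lemma rLF_S: "r \<inter> LF \<subseteq> S" unfolding S_def using rs by auto

lemma S_subspace: "subspace f S" unfolding S_def LF_def
  using s_ideal by (intro P.subspace_Int P.lie_br_subspace) (auto simp: ideal_def)
lemma r_subspace: "subspace f r" using r_ideal by (simp add: ideal_def)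

lemma A_leib: "leibniz A" unfolding A_def S_def LF_def by (rule P.schur_setup(1)[OF r_ideal s_ideal rs])
lemma J_sub: "J \<subseteq> r \<inter> LF" unfolding J_def LF_def by (rule P.schur_setup(2)[OF r_ideal s_ideal rs])
lemma J_ideal: "ideal A J" unfolding A_def S_def LF_def J_def by (rule P.schur_setup(3)[OF r_ideal s_ideal rs])

sublocale AA: LB A by (rule LB_I[OF A_leib])

lemma AA_simps[simp]: "AA.carr = S" "AA.add = P.add" "AA.sm = P.sm" "AA.br = P.br" "AA.zer = P.zer"
  by (simp_all add: A_def)

lemma AA_sub[simp]: "AA.sub = P.sub" by (simp add: fun_eq_iff AA.sub_def P.sub_def)

lemma q_leib: "leibniz q" unfolding q_def by (rule AA.leibniz_quot[OF J_ideal])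

sublocale QQ: LB q by (rule LB_I[OF q_leib])

abbreviation "cJ \<equiv> coset A J"

lemma q_carr: "QQ.carr = cJ ` S" unfolding q_def using AA.quot_carr[OF J_ideal] by simp
lemma q_add: "x \<in> S \<Longrightarrow> y \<in> S \<Longrightarrow> QQ.add (cJ x) (cJ y) = cJ (P.add x y)"
  unfolding q_def using AA.quot_add[OF J_ideal] by simp
lemma q_sm: "x \<in> S \<Longrightarrow> QQ.sm k (cJ x) = cJ (P.sm k x)"
  unfolding q_def using AA.quot_sm[OF J_ideal] by simp
lemma q_br: "x \<in> S \<Longrightarrow> y \<in> S \<Longrightarrow> QQ.br (cJ x) (cJ y) = cJ (P.br x y)"
  unfolding q_def using AA.quot_br[OF J_ideal] by simp
lemma q_zero: "QQ.zer = cJ P.zer" unfolding q_def using AA.quot_zero[OF J_ideal] by simp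
lemma q_sub: "x \<in> S \<Longrightarrow> y \<in> S \<Longrightarrow> QQ.sub (cJ x) (cJ y) = cJ (P.sub x y)"
proof -
  assume xy: "x \<in> S" "y \<in> S"
  have "P.sm (-1) y \<in> S" using P.subspace_sm[OF S_subspace xy(2)] .
  then show ?thesis using xy by (simp add: QQ.sub_def P.sub_def q_sm q_add)
qed


lemma S_LF: "y \<in> S \<Longrightarrow> y \<in> LF" by (simp add: S_def)

lemma br_S_zero: "x \<in> P.carr \<Longrightarrow> y \<in> S \<Longrightarrow> P.br x y = P.zer"
  using S_LF unfolding LF_def by (intro P.lie_ann) auto

lemma q_br_zero: "X \<in> QQ.carr \<Longrightarrow> Y \<in> QQ.carr \<Longrightarrow> QQ.br X Y = QQ.zer"
proof -
  assume "X \<in> QQ.carr" "Y \<in> QQ.carr"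
  then obtain x y where xy: "x \<in> S" "y \<in> S" "X = cJ x" "Y = cJ y" unfolding q_carr by blast
  then show ?thesis using SC by (simp add: q_br q_zero br_S_zero subsetD)
qed

lemma cJ_in_m: "y \<in> S \<Longrightarrow> cJ y \<in> m \<longleftrightarrow> y \<in> r"
proof
  assume y: "y \<in> S" and "cJ y \<in> m"
  then obtain z where z: "z \<in> r \<inter> LF" "cJ y = cJ z" unfolding m_def by blast
  have zS: "z \<in> S" using z rLF_S by auto
  have "P.sub y z \<in> J" using z y zS AA.coset_eq[OF J_ideal, of y z] by simp
  then have "P.sub y z \<in> r" using J_sub by auto
  then have "P.add (P.sub y z) z \<in> r" using z P.subspace_add[OF r_subspace] by auto
  then show "y \<in> r" using y zS SC by (simp add: P.add_sub_cancel subsetD)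
next
  assume "y \<in> S" "y \<in> r"
  then show "cJ y \<in> m" unfolding m_def using S_LF by auto
qed

lemma m_ideal: "ideal q m"
  unfolding ideal_def subspace_def
proof (intro conjI ballI allI)
  show "m \<subseteq> QQ.carr" unfolding m_def q_carr using rLF_S by auto
  show "QQ.zer \<in> m" unfolding q_zero m_def LF_def
    using P.subspace_zero[OF r_subspace] P.subspace_zero[OF P.lie_br_subspace[of P.carr P.carr]] by auto
  fix X Y assume "X \<in> m" "Y \<in> m"
  then obtain x y where xy: "x \<in> r \<inter> LF" "y \<in> r \<inter> LF" "X = cJ x" "Y = cJ y" unfolding m_def by blast
  have "P.add x y \<in> r \<inter> LF" using xy P.subspace_add[OF r_subspace] P.subspace_add[OF P.lie_br_subspace[of P.carr P.carr]]
    unfolding LF_def by auto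
  moreover have "x \<in> S" "y \<in> S" using xy rLF_S by auto
  ultimately show "QQ.add X Y \<in> m" using xy by (auto simp: q_add m_def)
next
  fix k X assume "X \<in> m"
  then obtain x where xy: "x \<in> r \<inter> LF" "X = cJ x" unfolding m_def by blast
  have "P.sm k x \<in> r \<inter> LF" using xy P.subspace_sm[OF r_subspace] P.subspace_sm[OF P.lie_br_subspace[of P.carr P.carr]]
    unfolding LF_def by auto
  moreover have "x \<in> S" using xy rLF_S by auto
  ultimately show "QQ.sm k X \<in> m" using xy by (auto simp: q_sm m_def)
next
  fix X I assume X: "X \<in> QQ.carr" and I: "I \<in> m"
  have IC: "I \<in> QQ.carr" using I unfolding m_def q_carr using rLF_S by auto
  have z: "QQ.zer \<in> m" unfolding q_zero m_def LF_def
    using P.subspace_zero[OF r_subspace] P.subspace_zero[OF P.lie_br_subspace[of P.carr P.carr]] by auto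
  show "QQ.br X I \<in> m" "QQ.br I X \<in> m" using q_br_zero[OF X IC] q_br_zero[OF IC X] z by auto
qed

sublocale QM: LB "quot q m" by (rule LB_I[OF QQ.leibniz_quot[OF m_ideal]])

lemma cm_eq: "y1 \<in> S \<Longrightarrow> y2 \<in> S \<Longrightarrow> coset q m (cJ y1) = coset q m (cJ y2) \<longleftrightarrow> c y1 = c y2"
proof -
  assume y: "y1 \<in> S" "y2 \<in> S"
  have yC: "y1 \<in> P.carr" "y2 \<in> P.carr" using y SC by auto
  have cq: "cJ y1 \<in> QQ.carr" "cJ y2 \<in> QQ.carr" using y unfolding q_carr by auto
  have dS: "P.sub y1 y2 \<in> S" using y by (rule P.subspace_sub[OF S_subspace])
  have "coset q m (cJ y1) = coset q m (cJ y2) \<longleftrightarrow> QQ.sub (cJ y1) (cJ y2) \<in> m"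
    using cq by (rule QQ.coset_eq[OF m_ideal])
  also have "\<dots> \<longleftrightarrow> P.sub y1 y2 \<in> r" using y dS by (simp add: q_sub cJ_in_m)
  also have "\<dots> \<longleftrightarrow> Q.sub (c y1) (c y2) = Q.zer" using dS SC yC by (auto simp: r_def h_sub)
  also have "\<dots> \<longleftrightarrow> c y1 = c y2" using yC by (simp add: Q.sub_eq_zero_iff)
  finally show ?thesis .
qed

definition "T = lie_br g Q.carr Q.carr \<inter> b"

lemma T_subspace: "subspace g T" unfolding T_def
  using b by (intro Q.subspace_Int Q.lie_br_subspace) (auto simp: ideal_def)

lemma c_LF: "c ` LF \<subseteq> lie_br g Q.carr Q.carr" unfolding LF_def by (rule hom_lie_br) auto

lemma c_S: "y \<in> S \<Longrightarrow> c y \<in> T" using c_LF unfolding S_def s_def T_def by auto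

lemma lift: "t \<in> T \<Longrightarrow> \<exists>y\<in>S. c y = t"
proof -
  assume t: "t \<in> T"
  then obtain y where y: "y \<in> LF" "c y = t" using lie_br_surj[OF surj] unfolding T_def LF_def by blast
  then have "y \<in> s" using t LFC unfolding s_def T_def by auto
  then show ?thesis using y unfolding S_def by auto
qed

definition "lft t = (SOME y. y \<in> S \<and> c y = t)"
lemma lft: "t \<in> T \<Longrightarrow> lft t \<in> S \<and> c (lft t) = t"
  unfolding lft_def using lift by (metis (mono_tags, lifting) someI_ex)

definition "Fa t = coset q m (cJ (lft t))"

lemma T_br: "t1 \<in> T \<Longrightarrow> t2 \<in> T \<Longrightarrow> Q.br t1 t2 = Q.zer"
  unfolding T_def using bC by (intro Q.lie_ann) auto

lemma part_a: "isomorphic (subalg g T) (quot q m)"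
  unfolding isomorphic_def
proof (intro exI conjI)
  have TC: "T \<subseteq> Q.carr" using T_subspace by (simp add: subspace_def)
  have Fa_c: "Fa t = coset q m (cJ y)" if "t \<in> T" "y \<in> S" "c y = t" for t y
    unfolding Fa_def using that lft[OF that(1)] by (simp add: cm_eq)
  show "hom (subalg g T) (quot q m) Fa"
    unfolding hom_def subalg_simps
  proof (intro conjI ballI allI)
    fix t assume t: "t \<in> T"
    show "Fa t \<in> QM.carr" unfolding Fa_def using lft[OF t]
      by (simp add: QQ.quot_carr[OF m_ideal] q_carr)
  next
    fix t1 t2 assume t: "t1 \<in> T" "t2 \<in> T"
    note l = lft[OF t(1)] lft[OF t(2)]
    have aS: "P.add (lft t1) (lft t2) \<in> S" using l by (intro P.subspace_add[OF S_subspace]) auto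
    have "ladd (quot q m) (Fa t1) (Fa t2) = coset q m (QQ.add (cJ (lft t1)) (cJ (lft t2)))"
      unfolding Fa_def using l by (intro QQ.quot_add[OF m_ideal]) (auto simp: q_carr)
    also have "\<dots> = coset q m (cJ (P.add (lft t1) (lft t2)))" using l by (simp add: q_add)
    also have "\<dots> = Fa (Q.add t1 t2)"
      using l aS t SC by (intro Fa_c[symmetric] Q.subspace_add[OF T_subspace]) (auto simp: h_add subsetD)
    finally show "Fa (Q.add t1 t2) = ladd (quot q m) (Fa t1) (Fa t2)" by simp
  next
    fix k t assume t: "t \<in> T"
    note l = lft[OF t]
    have aS: "P.sm k (lft t) \<in> S" using l by (intro P.subspace_sm[OF S_subspace]) auto
    have "lsmult (quot q m) k (Fa t) = coset q m (QQ.sm k (cJ (lft t)))"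
      unfolding Fa_def using l by (intro QQ.quot_sm[OF m_ideal]) (auto simp: q_carr)
    also have "\<dots> = coset q m (cJ (P.sm k (lft t)))" using l by (simp add: q_sm)
    also have "\<dots> = Fa (Q.sm k t)"
      using l aS t SC by (intro Fa_c[symmetric] Q.subspace_sm[OF T_subspace]) (auto simp: h_sm subsetD)
    finally show "Fa (Q.sm k t) = lsmult (quot q m) k (Fa t)" by simp
  next
    fix t1 t2 assume t: "t1 \<in> T" "t2 \<in> T"
    note l = lft[OF t(1)] lft[OF t(2)]
    have cq: "cJ (lft t1) \<in> QQ.carr" "cJ (lft t2) \<in> QQ.carr" using l by (auto simp: q_carr)
    have zS: "P.zer \<in> S" by (rule P.subspace_zero[OF S_subspace])
    have "lbr (quot q m) (Fa t1) (Fa t2) = coset q m (QQ.br (cJ (lft t1)) (cJ (lft t2)))"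
      unfolding Fa_def using cq by (intro QQ.quot_br[OF m_ideal])
    also have "\<dots> = coset q m (cJ P.zer)" using cq by (simp add: q_br_zero q_zero)
    also have "\<dots> = Fa (Q.br t1 t2)" using T_br[OF t] zS
      by (intro Fa_c[symmetric]) (auto intro: Q.subspace_zero[OF T_subspace])
    finally show "Fa (Q.br t1 t2) = lbr (quot q m) (Fa t1) (Fa t2)" by simp
  qed
  show "bij_betw Fa (lcarrier (subalg g T)) QM.carr"
    unfolding bij_betw_def subalg_simps
  proof
    show "inj_on Fa T"
    proof (rule inj_onI)
      fix t1 t2 assume t: "t1 \<in> T" "t2 \<in> T" "Fa t1 = Fa t2"
      then have "c (lft t1) = c (lft t2)" using lft[OF t(1)] lft[OF t(2)] unfolding Fa_def by (simp add: cm_eq)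
      then show "t1 = t2" using lft[OF t(1)] lft[OF t(2)] by simp
    qed
    show "Fa ` T = QM.carr"
    proof
      show "Fa ` T \<subseteq> QM.carr" unfolding Fa_def using lft
        by (auto simp: QQ.quot_carr[OF m_ideal] q_carr)
      show "QM.carr \<subseteq> Fa ` T"
      proof
        fix Z assume "Z \<in> QM.carr"
        then obtain y where y: "y \<in> S" "Z = coset q m (cJ y)"
          by (auto simp: QQ.quot_carr[OF m_ideal] q_carr)
        have "Fa (c y) = Z" using y c_S by (simp add: Fa_c)
        then show "Z \<in> Fa ` T" using c_S[OF y(1)] by blast
      qed
    qed
  qed
qed


definition "B = subalg f (r \<inter> LF)"

lemma B_leib: "leibniz B" unfolding B_def LF_def by (rule P.schur_setup(1)[OF r_ideal r_ideal subset_refl])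
lemma J_idealB: "ideal B J" unfolding B_def LF_def J_def by (rule P.schur_setup(3)[OF r_ideal r_ideal subset_refl])

sublocale BB: LB B by (rule LB_I[OF B_leib])

lemma BB_simps[simp]: "BB.carr = r \<inter> LF" "BB.add = P.add" "BB.sm = P.sm" "BB.br = P.br" "BB.zer = P.zer"
  by (simp_all add: B_def)

lemma coset_same: "z \<in> r \<Longrightarrow> cJ z = coset B J z"
proof -
  assume z: "z \<in> r"
  have "y \<in> S \<longleftrightarrow> y \<in> r \<inter> LF" if "i \<in> J" "y = P.add z i" for y i
  proof -
    have "i \<in> r" using that J_sub by auto
    then have "y \<in> r" using that z P.subspace_add[OF r_subspace] by auto
    then show ?thesis using rs unfolding S_def by auto
  qed
  then show ?thesis unfolding coset_def A_def B_def by auto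
qed

lemma part_b: "isomorphic (subalg q m) (quot B J)"
  unfolding isomorphic_def
proof (intro exI conjI)
  have carrB: "lcarrier (quot B J) = m"
    unfolding BB.quot_carr[OF J_idealB] BB_simps m_def using coset_same by auto
  have mr: "X \<in> m \<Longrightarrow> \<exists>x. x \<in> r \<inter> LF \<and> x \<in> S \<and> X = cJ x \<and> X = coset B J x" for X
    unfolding m_def using coset_same rLF_S by auto
  show "bij_betw id (lcarrier (subalg q m)) (lcarrier (quot B J))" using carrB by simp
  show "hom (subalg q m) (quot B J) id"
    unfolding hom_def subalg_simps carrB
  proof (intro conjI ballI allI)
    fix X Y assume "X \<in> m" "Y \<in> m"
    then obtain x y where x: "x \<in> r \<inter> LF" "x \<in> S" "X = cJ x" "X = coset B J x"
      and y: "y \<in> r \<inter> LF" "y \<in> S" "Y = cJ y" "Y = coset B J y" using mr by metis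
    have a1: "P.add x y \<in> r" using x y P.subspace_add[OF r_subspace] by auto
    have b1: "P.br x y \<in> r" using x y r_ideal rC unfolding ideal_def by auto
    have "QQ.add X Y = cJ (P.add x y)" using x y by (simp add: q_add)
    also have "\<dots> = coset B J (P.add x y)" using a1 by (rule coset_same)
    also have "\<dots> = ladd (quot B J) X Y" using x(1,4) y(1,4) by (simp add: BB.quot_add[OF J_idealB])
    finally show "id (QQ.add X Y) = ladd (quot B J) (id X) (id Y)" by simp
    have "QQ.br X Y = cJ (P.br x y)" using x y by (simp add: q_br)
    also have "\<dots> = coset B J (P.br x y)" using b1 by (rule coset_same)
    also have "\<dots> = lbr (quot B J) X Y" using x(1,4) y(1,4) by (simp add: BB.quot_br[OF J_idealB])
    finally show "id (QQ.br X Y) = lbr (quot B J) (id X) (id Y)" by simp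
  next
    fix k X assume "X \<in> m"
    then obtain x where x: "x \<in> r \<inter> LF" "x \<in> S" "X = cJ x" "X = coset B J x" using mr by metis
    have a1: "P.sm k x \<in> r" using x P.subspace_sm[OF r_subspace] by auto
    have "QQ.sm k X = cJ (P.sm k x)" using x by (simp add: q_sm)
    also have "\<dots> = coset B J (P.sm k x)" using a1 by (rule coset_same)
    also have "\<dots> = lsmult (quot B J) k X" using x(1,4) by (simp add: BB.quot_sm[OF J_idealB])
    finally show "id (QQ.sm k X) = lsmult (quot B J) k (id X)" by simp
  next
    fix X assume "X \<in> m" then show "id X \<in> m" by simp
  qed
qed

end


context Pres
begin

lemma part_c:
  fixes f2 :: "('k, 'y) leib" and c2 :: "'y \<Rightarrow> 'a set" and psi :: "'x \<Rightarrow> 'y" and sig :: "'y \<Rightarrow> 'x"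
  assumes f2: "leibniz f2" and c2: "hom f2 (quot g b) c2"
    and psi: "hom f f2 psi" and sig: "hom f2 f sig"
    and comm: "\<And>a. a \<in> P.carr \<Longrightarrow> c2 (psi a) = coset g b (c a)"
    and retr: "\<And>a. a \<in> lcarrier f2 \<Longrightarrow> psi (sig a) = a"
  shows "epimorphic_image (quot (subalg f2 ({a \<in> lcarrier f2. c2 a = lzero (quot g b)} \<inter> lie_br f2 (lcarrier f2) (lcarrier f2)))
            (lie_br f2 (lcarrier f2) {a \<in> lcarrier f2. c2 a = lzero (quot g b)})) q"
proof -
  interpret GB: LB "quot g b" by (rule LB_I[OF Q.leibniz_quot[OF b]])
  interpret F2: LB f2 by (rule LB_I[OF f2])
  interpret HC2: HM f2 "quot g b" c2 by unfold_locales (rule c2)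
  interpret HP: HM f f2 psi by unfold_locales (rule psi)
  interpret HS: HM f2 f sig by unfold_locales (rule sig)
  define r2 where "r2 = {a \<in> F2.carr. c2 a = GB.zer}"
  define LF2 where "LF2 = lie_br f2 F2.carr F2.carr"
  define J2 where "J2 = lie_br f2 F2.carr r2"
  define B2 where "B2 = subalg f2 (r2 \<inter> LF2)"
  have r2i: "ideal f2 r2" unfolding r2_def by (rule HC2.kernel_ideal)
  have r2s: "subspace f2 r2" using r2i by (simp add: ideal_def)
  have r2C: "r2 \<subseteq> F2.carr" unfolding r2_def by auto
  have B2l: "leibniz B2" unfolding B2_def LF2_def by (rule F2.schur_setup(1)[OF r2i r2i subset_refl])
  have J2i: "ideal B2 J2" unfolding B2_def LF2_def J2_def by (rule F2.schur_setup(3)[OF r2i r2i subset_refl])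
  interpret BB2: LB B2 by (rule LB_I[OF B2l])
  have BB2_simps[simp]: "BB2.carr = r2 \<inter> LF2" "BB2.add = F2.add" "BB2.sm = F2.sm" "BB2.br = F2.br" "BB2.zer = F2.zer"
    by (simp_all add: B2_def)
  have BB2_sub[simp]: "BB2.sub = F2.sub" by (simp add: fun_eq_iff BB2.sub_def F2.sub_def)
  have LF2s: "subspace f2 (r2 \<inter> LF2)" unfolding LF2_def
    using r2s by (intro F2.subspace_Int F2.lie_br_subspace) auto
  have psi_s: "psi a \<in> r2" if "a \<in> s" for a
  proof -
    have a: "a \<in> P.carr" "c a \<in> b" using that unfolding s_def by auto
    have "coset g b (c a) = coset g b Q.zer" using a bC by (subst Q.coset_eq[OF b]) auto
    then have "c2 (psi a) = GB.zer" using comm[OF a(1)] by (simp add: Q.quot_zero[OF b])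
    then show ?thesis unfolding r2_def using a by auto
  qed
  have psi_LF: "psi ` LF \<subseteq> LF2" unfolding LF_def LF2_def by (rule HP.hom_lie_br) auto
  have psi_J: "psi ` J \<subseteq> J2" unfolding J_def J2_def
    using rC r2C psi_s rs by (intro HP.hom_lie_br) auto
  have psi_S: "psi y \<in> r2 \<inter> LF2" if "y \<in> S" for y
    using that psi_s psi_LF unfolding S_def by auto
  define cB2 where "cB2 = coset B2 J2"
  define Fc where "Fc X = cB2 (psi (SOME x. x \<in> X))" for X
  have Fc_c: "Fc (cJ y) = cB2 (psi y)" if y: "y \<in> S" for y
  proof -
    have yC: "y \<in> AA.carr" using y by simp
    define x where "x = (SOME x. x \<in> cJ y)"
    have x: "x \<in> S" "P.sub x y \<in> J" using AA.coset_some[OF J_ideal yC] unfolding x_def by auto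
    have xyC: "x \<in> P.carr" "y \<in> P.carr" using x y SC by auto
    have "psi (P.sub x y) \<in> J2" using x psi_J by auto
    then have "F2.sub (psi x) (psi y) \<in> J2" using xyC by (simp add: HP.h_sub)
    then have "cB2 (psi x) = cB2 (psi y)" unfolding cB2_def
      using psi_S[OF x(1)] psi_S[OF y] by (subst BB2.coset_eq[OF J2i]) auto
    then show ?thesis unfolding Fc_def x_def by simp
  qed
  have carrB2: "lcarrier (quot B2 J2) = cB2 ` (r2 \<inter> LF2)"
    unfolding cB2_def using BB2.quot_carr[OF J2i] by simp
  have hom: "hom q (quot B2 J2) Fc"
    unfolding hom_def
  proof (intro conjI ballI allI)
    fix X assume "X \<in> QQ.carr"
    then obtain x where x: "x \<in> S" "X = cJ x" unfolding q_carr by blast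
    show "Fc X \<in> lcarrier (quot B2 J2)" using x psi_S[OF x(1)] Fc_c[OF x(1)] carrB2 by auto
  next
    fix X Y assume "X \<in> QQ.carr" "Y \<in> QQ.carr"
    then obtain x y where x: "x \<in> S" "X = cJ x" and y: "y \<in> S" "Y = cJ y" unfolding q_carr by blast
    have xyC: "x \<in> P.carr" "y \<in> P.carr" using x y SC by auto
    have aS: "P.add x y \<in> S" using x y by (intro P.subspace_add[OF S_subspace])
    have "Fc (QQ.add X Y) = cB2 (psi (P.add x y))" using x y aS by (simp add: q_add Fc_c)
    also have "\<dots> = cB2 (F2.add (psi x) (psi y))" using xyC by (simp add: HP.h_add)
    also have "\<dots> = ladd (quot B2 J2) (cB2 (psi x)) (cB2 (psi y))"
      unfolding cB2_def using psi_S[OF x(1)] psi_S[OF y(1)] by (subst BB2.quot_add[OF J2i]) auto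
    finally show "Fc (QQ.add X Y) = ladd (quot B2 J2) (Fc X) (Fc Y)" using x y by (simp add: Fc_c)
    have bS: "P.br x y \<in> S" using x y xyC br_S_zero P.subspace_zero[OF S_subspace] by simp
    have "Fc (QQ.br X Y) = cB2 (psi (P.br x y))" using x y bS by (simp add: q_br Fc_c)
    also have "\<dots> = cB2 (F2.br (psi x) (psi y))" using xyC by (simp add: HP.h_br)
    also have "\<dots> = lbr (quot B2 J2) (cB2 (psi x)) (cB2 (psi y))"
      unfolding cB2_def using psi_S[OF x(1)] psi_S[OF y(1)] by (subst BB2.quot_br[OF J2i]) auto
    finally show "Fc (QQ.br X Y) = lbr (quot B2 J2) (Fc X) (Fc Y)" using x y by (simp add: Fc_c)
  next
    fix k X assume "X \<in> QQ.carr"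
    then obtain x where x: "x \<in> S" "X = cJ x" unfolding q_carr by blast
    have xC: "x \<in> P.carr" using x SC by auto
    have aS: "P.sm k x \<in> S" using x by (intro P.subspace_sm[OF S_subspace])
    have "Fc (QQ.sm k X) = cB2 (psi (P.sm k x))" using x aS by (simp add: q_sm Fc_c)
    also have "\<dots> = cB2 (F2.sm k (psi x))" using xC by (simp add: HP.h_sm)
    also have "\<dots> = lsmult (quot B2 J2) k (cB2 (psi x))"
      unfolding cB2_def using psi_S[OF x(1)] by (subst BB2.quot_sm[OF J2i]) auto
    finally show "Fc (QQ.sm k X) = lsmult (quot B2 J2) k (Fc X)" using x by (simp add: Fc_c)
  qed
  have onto: "Fc ` QQ.carr = lcarrier (quot B2 J2)"
  proof
    show "Fc ` QQ.carr \<subseteq> lcarrier (quot B2 J2)" using hom unfolding hom_def by auto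
    show "lcarrier (quot B2 J2) \<subseteq> Fc ` QQ.carr"
    proof
      fix Z assume "Z \<in> lcarrier (quot B2 J2)"
      then obtain z where z: "z \<in> r2" "z \<in> LF2" "Z = cB2 z" unfolding carrB2 by blast
      have zC: "z \<in> F2.carr" using z r2C by auto
      define y where "y = sig z"
      have yC: "y \<in> P.carr" unfolding y_def using zC by auto
      have yLF: "y \<in> LF" unfolding y_def using z(2) HS.hom_lie_br[of F2.carr F2.carr P.carr P.carr]
        unfolding LF_def LF2_def by auto
      have "coset g b (c y) = GB.zer" using comm[OF yC] retr[OF zC] z(1) unfolding y_def r2_def by simp
      then have "coset g b (c y) = coset g b Q.zer" by (simp add: Q.quot_zero[OF b])
      then have "c y \<in> b" using yC by (subst (asm) Q.coset_eq[OF b]) auto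
      then have yS: "y \<in> S" unfolding S_def s_def using yC yLF by auto
      have "Fc (cJ y) = Z" using Fc_c[OF yS] retr[OF zC] z(3) unfolding y_def by simp
      moreover have "cJ y \<in> QQ.carr" using yS unfolding q_carr by auto
      ultimately show "Z \<in> Fc ` QQ.carr" by blast
    qed
  qed
  show ?thesis unfolding epimorphic_image_def
    using hom onto unfolding B2_def J2_def r2_def LF2_def by blast
qed

end


lemma hom_id: "hom L L id" unfolding hom_def by auto

theorem mainTheorem3:
  fixes g :: "('k::field, 'a) leib" and b :: "'a set"
  assumes "(2::'k) \<noteq> 0"
    and "leibniz g"
    and "ideal g b"
  shows "\<exists>(q :: ('k, ('a list \<Rightarrow> 'k) set) leib) m.
           leibniz q \<and> ideal q m \<and>
           isomorphic (subalg g (lie_br g (lcarrier g) (lcarrier g) \<inter> b)) (quot q m) \<and>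
           isomorphic (subalg q m) (schur_lie g) \<and>
           epimorphic_image (schur_lie (quot g b)) q"
proof -
  note g = assms(2) and b = assms(3)
  interpret G: LB g by (rule LB_I[OF g])
  define f where "f = (free_leib (lcarrier g) :: ('k, 'a list \<Rightarrow> 'k) leib)"
  have fl: "leibniz f" unfolding f_def by (rule leibniz_free)
  interpret F: LB f by (rule LB_I[OF fl])
  have sC: "single_word [x] \<in> lcarrier (free_leib X :: ('k, 'x list \<Rightarrow> 'k) leib)" if "x \<in> X" for x X
    using that by (simp add: free_carr supp_single)
  have ex: "\<exists>\<phi>. hom f g \<phi> \<and> (\<forall>x\<in>lcarrier g. \<phi> (single_word [x]) = x)"
    using universal[OF g, of "lcarrier g" id] unfolding f_def by simp
  define c where "c = canon_pres g"
  have c: "hom f g c \<and> (\<forall>x\<in>lcarrier g. c (single_word [x]) = x)"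
    unfolding c_def canon_pres_def f_def[symmetric] by (rule someI_ex[OF ex])
  have surj: "c ` F.carr = G.carr"
  proof
    show "c ` F.carr \<subseteq> G.carr" using c unfolding hom_def by auto
    show "G.carr \<subseteq> c ` F.carr"
    proof
      fix x assume x: "x \<in> G.carr"
      then have "c (single_word [x]) = x" using c by auto
      moreover have "single_word [x] \<in> F.carr" unfolding f_def using x by (rule sC)
      ultimately show "x \<in> c ` F.carr" by (metis image_eqI)
    qed
  qed
  interpret P: Pres f g c b
    by (intro Pres.intro HM.intro Pres_axioms.intro HM_axioms.intro LB_I fl g b surj) (use c in auto)
  define gb where "gb = quot g b"
  have gbl: "leibniz gb" unfolding gb_def by (rule G.leibniz_quot[OF b])
  interpret GB: LB gb by (rule LB_I[OF gbl])
  define pi where "pi = coset g b"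
  have gb_carr: "GB.carr = pi ` G.carr" unfolding gb_def pi_def by (rule G.quot_carr[OF b])
  have pi_hom: "hom g gb pi"
    unfolding hom_def gb_def pi_def
    by (simp add: G.quot_add[OF b] G.quot_sm[OF b] G.quot_br[OF b] G.quot_carr[OF b])
  define rep where "rep X = (SOME x. x \<in> X)" for X :: "'a set"
  have rep: "rep X \<in> G.carr \<and> pi (rep X) = X" if X: "X \<in> GB.carr" for X
  proof -
    obtain x0 where x0: "x0 \<in> G.carr" "X = pi x0" using X gb_carr by auto
    have h: "rep X \<in> G.carr" "G.sub (rep X) x0 \<in> b"
      using G.coset_some[OF b x0(1)] x0(2) unfolding rep_def pi_def by auto
    have "pi (rep X) = pi x0" unfolding pi_def using h x0 by (subst G.coset_eq[OF b]) auto
    then show ?thesis using h x0 by simp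
  qed
  define f2 where "f2 = (free_leib GB.carr :: ('k, 'a set list \<Rightarrow> 'k) leib)"
  have f2l: "leibniz f2" unfolding f2_def by (rule leibniz_free)
  interpret F2: LB f2 by (rule LB_I[OF f2l])
  have "\<exists>\<phi>. hom f2 f \<phi> \<and> (\<forall>X\<in>GB.carr. \<phi> (single_word [X]) = single_word [rep X])"
  proof -
    have e: "\<And>X. X \<in> GB.carr \<Longrightarrow> single_word [rep X] \<in> F.carr"
      unfolding f_def using rep by (intro sC) blast
    show ?thesis unfolding f2_def by (rule universal[OF fl e])
  qed
  then obtain sig where sig: "hom f2 f sig" "\<And>X. X \<in> GB.carr \<Longrightarrow> sig (single_word [X]) = single_word [rep X]"
    by blast
  have "\<exists>\<phi>. hom f f2 \<phi> \<and> (\<forall>x\<in>G.carr. \<phi> (single_word [x]) = single_word [pi x])"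
  proof -
    have e: "\<And>x. x \<in> G.carr \<Longrightarrow> single_word [pi x] \<in> F2.carr"
      unfolding f2_def using gb_carr by (intro sC) blast
    show ?thesis unfolding f_def by (rule universal[OF f2l e])
  qed
  then obtain psi where psi: "hom f f2 psi" "\<And>x. x \<in> G.carr \<Longrightarrow> psi (single_word [x]) = single_word [pi x]"
    by blast
  have ex2: "\<exists>\<phi>. hom f2 gb \<phi> \<and> (\<forall>X\<in>GB.carr. \<phi> (single_word [X]) = X)"
  proof (intro exI conjI ballI)
    show "hom f2 gb (pi \<circ> c \<circ> sig)" using sig(1) c pi_hom by (intro hom_comp) auto
    fix X assume X: "X \<in> GB.carr"
    show "(pi \<circ> c \<circ> sig) (single_word [X]) = X" using sig(2)[OF X] c rep[OF X] by simp
  qed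
  define c2 where "c2 = canon_pres gb"
  have c2: "hom f2 gb c2 \<and> (\<forall>X\<in>GB.carr. c2 (single_word [X]) = X)"
    unfolding c2_def canon_pres_def f2_def[symmetric] by (rule someI_ex[OF ex2])
  have comm: "c2 (psi a) = pi (c a)" if a: "a \<in> F.carr" for a
  proof -
    have "(c2 \<circ> psi) a = (pi \<circ> c) a"
    proof (rule unique[of gb "lcarrier g" "c2 \<circ> psi" "pi \<circ> c", folded f_def])
      show "vector_space_on gb" using gbl by (simp add: leibniz_def)
      show "hom f gb (c2 \<circ> psi)" using psi(1) c2 by (intro hom_comp) auto
      show "hom f gb (pi \<circ> c)" using c pi_hom by (intro hom_comp) auto
      fix x assume x: "x \<in> G.carr"
      have "pi x \<in> GB.carr" using x gb_carr by auto
      then show "(c2 \<circ> psi) (single_word [x]) = (pi \<circ> c) (single_word [x])" using psi(2)[OF x] c2 c x by simp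
    qed (rule a)
    then show ?thesis by simp
  qed
  have retr: "psi (sig a) = a" if a: "a \<in> F2.carr" for a
  proof -
    have "(psi \<circ> sig) a = id a"
    proof (rule unique[of f2 GB.carr "psi \<circ> sig" id, folded f2_def])
      show "vector_space_on f2" using f2l by (simp add: leibniz_def)
      show "hom f2 f2 (psi \<circ> sig)" using psi(1) sig(1) by (intro hom_comp)
      show "hom f2 f2 id" by (rule hom_id)
      fix X assume X: "X \<in> GB.carr"
      show "(psi \<circ> sig) (single_word [X]) = id (single_word [X])" using sig(2)[OF X] psi(2) rep[OF X] by simp
    qed (rule a)
    then show ?thesis by simp
  qed
  have pc: "epimorphic_image (quot (subalg f2 ({a \<in> lcarrier f2. c2 a = lzero (quot g b)} \<inter> lie_br f2 (lcarrier f2) (lcarrier f2)))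
            (lie_br f2 (lcarrier f2) {a \<in> lcarrier f2. c2 a = lzero (quot g b)})) P.q"
    using P.part_c[OF f2l _ psi(1) sig(1)] c2 comm retr unfolding gb_def pi_def by auto
  show ?thesis
  proof (intro exI conjI)
    show "leibniz P.q" by (rule P.q_leib)
    show "ideal P.q P.m" by (rule P.m_ideal)
    show "isomorphic (subalg g (lie_br g (lcarrier g) (lcarrier g) \<inter> b)) (quot P.q P.m)"
      using P.part_a unfolding P.T_def .
    show "isomorphic (subalg P.q P.m) (schur_lie g)"
      using P.part_b unfolding P.B_def P.J_def P.r_def P.LF_def
      unfolding schur_lie_def Let_def f_def c_def .
    show "epimorphic_image (schur_lie (quot g b)) P.q"
      using pc unfolding schur_lie_def Let_def c2_def gb_def f2_def .
  qed
qed


end
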